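(* Let $Z_i=(X_i,Y_i)$, $i=1,\dots,n+1$, be i.i.d., let $V(\cdot)$ be a fixed score function with $V_i=V(Z_i)$ and $P_{V|x}(v)=\mathbb P(V(Z)\le v\mid X=x)$, and let $H(x_1,x_2)=\exp(-d(x_1,x_2)/h_n)$ with $d\ge0$, $d(x,x)=0$. Assume: $X$ has a continuous distribution on $[0,1]^p$, $V(Z)$ is continuous given $X=x$, and there are constants $L>0$, $\beta\ge0$ with $p_X\ge1/L$ on $[0,1]^p$ and (i) $\max_v|P_{V|x}(v)-P_{V|x'}(v)|\le L\,d(x,x')$ for all $x,x'\in[0,1]^p$; (ii) $\mathbb P(d(x_0,X)\le\varepsilon)\ge\varepsilon^\beta/L$ for all $\varepsilon\le h_n$, $x_0\in[0,1]^p$; (iii) $h_n\to0$ and $nh_n^\beta/\ln n\to\infty$. For $x_0\in[0,1]^p$ define $B(x_0)=\sum_{j=1}^{n+1}H(x_0,X_j)$, $\Delta(x_0,X)=H(x_0,X)\max_v|P_{V|X}(v)-P_{V|x_0}(v)|$ and $\Delta(x_0)=\sum_{i=1}^n\Delta(x_0,X_i)$. Then: (a) There is a constant $C>0$ such that for all $x_0\in[0,1]^p$, $$\mathbb P\Big(B(x_0)\le\frac{nh_n^\beta}{2eL}\Big)\le\exp\Big(-\frac{nh_n^\beta}{8L}\Big),\qquad \frac{\Delta(x_0)}{B(x_0)\vee(nh_n^\beta)}\le C\,h_n\ln(h_n^{-1}).$$ (b) Let $B_i=B(X_i)$, $H_{ij}=H(X_i,X_j)$ and $R_i=\frac{1}{B_i}\sum_{j\le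 n,\,j\ne i}H_{ij}\big(\mathbb 1\{V_j<V_i\}-P_{V|X_j}(V_i)\big)$. Then for every $i=1,\dots,n+1$ and every value of $V_i$, $$\mathbb P\Big(|R_i|\ge\sqrt{\tfrac{\ln n}{B_i}}\,\Big|\,X_1,\dots,X_{n+1},V_i\Big)\le\frac{2}{n^2}.$$
   Context: $a\vee b=\max\{a,b\}$; $e$ is Euler's number. *)

theory Defs
  imports "HOL-Probability.Probability"
begin

definition unit_cube :: "(real^'p) set" where
  "unit_cube = {x. \<forall>k. 0 \<le> x $ k \<and> x $ k \<le> 1}"

definition kernH :: "('x \<Rightarrow> 'x \<Rightarrow> real) \<Rightarrow> real \<Rightarrow> 'x \<Rightarrow> 'x \<Rightarrow> real" where
  "kernH d h x1 x2 = exp (- d x1 x2 / h)"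

definition Bsum :: "('x \<Rightarrow> 'x \<Rightarrow> real) \<Rightarrow> real \<Rightarrow> (nat \<Rightarrow> 'a \<Rightarrow> 'x) \<Rightarrow> nat \<Rightarrow> 'x \<Rightarrow> 'a \<Rightarrow> real" where
  "Bsum d h X n x0 \<omega> = (\<Sum>j\<in>{1..n+1}. kernH d h x0 (X j \<omega>))"

definition cdf_gap :: "('x \<Rightarrow> real \<Rightarrow> real) \<Rightarrow> 'x \<Rightarrow> 'x \<Rightarrow> real" where
  "cdf_gap F x x0 = (SUP v. \<bar>F x v - F x0 v\<bar>)"

definition Delta_sum :: "('x \<Rightarrow> 'x \<Rightarrow> real) \<Rightarrow> real \<Rightarrow> ('x \<Rightarrow> real \<Rightarrow> real) \<Rightarrow> (nat \<Rightarrow> 'a \<Rightarrow> 'x) \<Rightarrow> nat \<Rightarrow> 'x \<Rightarrow> 'a \<Rightarrow> real" where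
  "Delta_sum d h F X n x0 \<omega> = (\<Sum>i\<in>{1..n}. kernH d h x0 (X i \<omega>) * cdf_gap F (X i \<omega>) x0)"

definition Rstat :: "('x \<Rightarrow> 'x \<Rightarrow> real) \<Rightarrow> real \<Rightarrow> ('x \<Rightarrow> real \<Rightarrow> real) \<Rightarrow> (nat \<Rightarrow> 'a \<Rightarrow> 'x) \<Rightarrow> (nat \<Rightarrow> 'a \<Rightarrow> real) \<Rightarrow> nat \<Rightarrow> nat \<Rightarrow> 'a \<Rightarrow> real" where
  "Rstat d h F X Vs n i \<omega> =
     (1 / Bsum d h X n (X i \<omega>) \<omega>) *
     (\<Sum>j\<in>{1..n} - {i}. kernH d h (X i \<omega>) (X j \<omega>) *
        ((if Vs j \<omega> < Vs i \<omega> then 1 else 0) - F (X j \<omega>) (Vs i \<omega>)))"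

definition cond_sigma :: "'a measure \<Rightarrow> (nat \<Rightarrow> 'a \<Rightarrow> 'x::topological_space) \<Rightarrow> (nat \<Rightarrow> 'a \<Rightarrow> real) \<Rightarrow> nat \<Rightarrow> nat \<Rightarrow> 'a measure" where
  "cond_sigma M X Vs n i =
     vimage_algebra (space M) (\<lambda>\<omega>. ((\<lambda>j\<in>{1..n+1}. X j \<omega>), Vs i \<omega>))
       (PiM {1..n+1} (\<lambda>_. borel) \<Otimes>\<^sub>M borel)"

end

theory Submission
  imports Defs "HOL-Probability.Hoeffding"
begin

locale A4 =
  fixes M :: "'a measure"
    and X :: "nat \<Rightarrow> 'a \<Rightarrow> real^'p"
    and Y :: "nat \<Rightarrow> 'a \<Rightarrow> 'y"
    and MY :: "'y measure"
    and V :: "(real^'p) \<times> 'y \<Rightarrow> real"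
    and d :: "real^'p \<Rightarrow> real^'p \<Rightarrow> real"
    and F :: "real^'p \<Rightarrow> real \<Rightarrow> real"
    and pX :: "real^'p \<Rightarrow> real"
    and L \<beta> :: real
    and h :: "nat \<Rightarrow> real"
  assumes P: "prob_space M"
    and meas_X: "\<And>i. X i \<in> borel_measurable M"
    and meas_Y: "\<And>i. Y i \<in> M \<rightarrow>\<^sub>M MY"
    and meas_V: "V \<in> borel_measurable (borel \<Otimes>\<^sub>M MY)"
    and indep: "prob_space.indep_vars M (\<lambda>_. borel \<Otimes>\<^sub>M MY) (\<lambda>i \<omega>. (X i \<omega>, Y i \<omega>)) {1..}"
    and ident: "\<And>i. i \<ge> 1 \<Longrightarrow>
        distr M (borel \<Otimes>\<^sub>M MY) (\<lambda>\<omega>. (X i \<omega>, Y i \<omega>)) = distr M (borel \<Otimes>\<^sub>M MY) (\<lambda>\<omega>. (X 1 \<omega>, Y 1 \<omega>))"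
    and support: "AE \<omega> in M. X 1 \<omega> \<in> unit_cube"
    and L_pos: "L > 0" and beta_nonneg: "\<beta> \<ge> 0"
    and meas_d: "case_prod d \<in> borel_measurable borel"
    and d_nonneg: "\<And>x x'. x \<in> unit_cube \<Longrightarrow> x' \<in> unit_cube \<Longrightarrow> d x x' \<ge> 0"
    and d_refl: "\<And>x. x \<in> unit_cube \<Longrightarrow> d x x = 0"
    and F_meas: "\<And>v. (\<lambda>x. F x v) \<in> borel_measurable borel"
    and F_cdf: "\<And>x. x \<in> unit_cube \<Longrightarrow>
        mono (F x) \<and> continuous_on UNIV (F x) \<and> (F x \<longlongrightarrow> 0) at_bot \<and> (F x \<longlongrightarrow> 1) at_top"
    and F_cond: "\<And>A v. A \<in> sets borel \<Longrightarrow>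
        measure M {\<omega> \<in> space M. X 1 \<omega> \<in> A \<and> V (X 1 \<omega>, Y 1 \<omega>) \<le> v}
          = set_lebesgue_integral (distr M borel (X 1)) A (\<lambda>x. F x v)"
    and lip: "\<And>x x' v. x \<in> unit_cube \<Longrightarrow> x' \<in> unit_cube \<Longrightarrow> \<bar>F x v - F x' v\<bar> \<le> L * d x x'"
    and small_ball: "\<And>n \<epsilon> x0. 0 < \<epsilon> \<Longrightarrow> \<epsilon> \<le> h n \<Longrightarrow> x0 \<in> unit_cube \<Longrightarrow>
        measure M {\<omega> \<in> space M. d x0 (X 1 \<omega>) \<le> \<epsilon>} \<ge> \<epsilon> powr \<beta> / L"
    and h_pos: "\<And>n. h n > 0"
    and h_lim: "h \<longlonglongrightarrow> 0"
begin

interpretation prob_space M by (rule P)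

lemma cube_meas [measurable]: "unit_cube \<in> sets borel"
  unfolding unit_cube_def by measurable

lemma meas_d' [measurable (raw)]:
  assumes "f \<in> N \<rightarrow>\<^sub>M borel" "g \<in> N \<rightarrow>\<^sub>M borel"
  shows "(\<lambda>z. d (f z) (g z)) \<in> borel_measurable N"
proof -
  have "(\<lambda>z. (f z, g z)) \<in> N \<rightarrow>\<^sub>M borel \<Otimes>\<^sub>M borel" using assms by measurable
  hence "(\<lambda>z. (f z, g z)) \<in> N \<rightarrow>\<^sub>M borel" by (simp add: borel_prod)
  from measurable_compose[OF this meas_d] show ?thesis by simp
qed

lemma F_bounds:
  assumes "x \<in> unit_cube" shows "0 \<le> F x v" "F x v \<le> 1"
proof -
  have mono: "mono (F x)" and l0: "(F x \<longlongrightarrow> 0) at_bot" and l1: "(F x \<longlongrightarrow> 1) at_top"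
    using F_cdf[OF assms] by auto
  have "eventually (\<lambda>w. F x w \<le> F x v) at_bot"
    unfolding eventually_at_bot_linorder by (rule exI[of _ v]) (auto intro: monoD[OF mono])
  from tendsto_upperbound[OF l0 this] show "0 \<le> F x v" by simp
  have "eventually (\<lambda>w. F x v \<le> F x w) at_top"
    unfolding eventually_at_top_linorder by (rule exI[of _ v]) (auto intro: monoD[OF mono])
  from tendsto_lowerbound[OF l1 this] show "F x v \<le> 1" by simp
qed

lemma Z_meas [measurable]: "(\<lambda>\<omega>. (X i \<omega>, Y i \<omega>)) \<in> M \<rightarrow>\<^sub>M borel \<Otimes>\<^sub>M MY"
  using meas_X meas_Y by measurable

lemma AE_cube: assumes "j \<ge> 1" shows "AE \<omega> in M. X j \<omega> \<in> unit_cube"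
proof -
  have "AE z in distr M (borel \<Otimes>\<^sub>M MY) (\<lambda>\<omega>. (X 1 \<omega>, Y 1 \<omega>)). fst z \<in> unit_cube"
    by (subst AE_distr_iff) (use support in auto)
  hence "AE z in distr M (borel \<Otimes>\<^sub>M MY) (\<lambda>\<omega>. (X j \<omega>, Y j \<omega>)). fst z \<in> unit_cube"
    by (simp only: ident[OF assms])
  thus ?thesis by (subst (asm) AE_distr_iff) auto
qed

end

context A4
begin

interpretation prob_space M by (rule P)

definition "\<nu> = distr M (borel \<Otimes>\<^sub>M MY) (\<lambda>\<omega>. (X 1 \<omega>, Y 1 \<omega>))"

lemma sets_nu [measurable_cong]: "sets \<nu> = sets (borel \<Otimes>\<^sub>M MY)"
  by (simp add: \<nu>_def)

lemma space_nu: "space \<nu> = space (borel \<Otimes>\<^sub>M MY)"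
  by (simp add: \<nu>_def)

lemma prob_nu: "prob_space \<nu>"
  unfolding \<nu>_def by (rule prob_space_distr) measurable

lemma prod_nu: "product_prob_space (\<lambda>_. \<nu>)"
  by (rule product_prob_spaceI) (rule prob_nu)

lemma distr_PiM:
  assumes "finite I" "I \<noteq> {}" "I \<subseteq> {1..}"
  shows "distr M (PiM I (\<lambda>_. \<nu>)) (\<lambda>\<omega>. \<lambda>j\<in>I. (X j \<omega>, Y j \<omega>)) = PiM I (\<lambda>_. \<nu>)"
proof -
  have ind: "indep_vars (\<lambda>_. borel \<Otimes>\<^sub>M MY) (\<lambda>i \<omega>. (X i \<omega>, Y i \<omega>)) I"
    by (rule indep_vars_subset[OF indep assms(3)])
  have "distr M (PiM I (\<lambda>_. borel \<Otimes>\<^sub>M MY)) (\<lambda>\<omega>. \<lambda>j\<in>I. (X j \<omega>, Y j \<omega>))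
      = PiM I (\<lambda>j. distr M (borel \<Otimes>\<^sub>M MY) (\<lambda>\<omega>. (X j \<omega>, Y j \<omega>)))"
    using ind by (subst (asm) indep_vars_iff_distr_eq_PiM'[OF assms(2)]) (simp_all add: Z_meas)
  also have "\<dots> = PiM I (\<lambda>_. \<nu>)"
  proof (rule PiM_cong)
    fix j assume "j \<in> I"
    hence "j \<ge> 1" using assms(3) by auto
    from ident[OF this] show "distr M (borel \<Otimes>\<^sub>M MY) (\<lambda>\<omega>. (X j \<omega>, Y j \<omega>)) = \<nu>"
      unfolding \<nu>_def .
  qed simp
  moreover have "distr M (PiM I (\<lambda>_. \<nu>)) (\<lambda>\<omega>. \<lambda>j\<in>I. (X j \<omega>, Y j \<omega>))
      = distr M (PiM I (\<lambda>_. borel \<Otimes>\<^sub>M MY)) (\<lambda>\<omega>. \<lambda>j\<in>I. (X j \<omega>, Y j \<omega>))"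
    by (rule distr_cong[OF refl _ refl]) (rule sets_PiM_cong; simp add: sets_nu)
  ultimately show ?thesis by simp
qed

lemma T_meas [measurable]:
  "(\<lambda>\<omega>. \<lambda>j\<in>I. (X j \<omega>, Y j \<omega>)) \<in> M \<rightarrow>\<^sub>M PiM I (\<lambda>_. \<nu>)"
  by (rule measurable_restrict) (simp add: measurable_cong_sets[OF refl sets_nu])

lemma ln2_le: "ln 2 \<le> (3/4::real)"
proof -
  have "(1 + (3/4) / real 8) ^ 8 \<le> exp (3/4::real)"
    by (rule exp_ge_one_plus_x_over_n_power_n) auto
  moreover have "(2::real) \<le> (1 + (3/4) / real 8) ^ 8" by (simp add: divide_simps)
  ultimately have "2 \<le> exp (3/4::real)" by linarith
  hence "ln 2 \<le> ln (exp (3/4::real))" by (subst ln_le_cancel_iff) auto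
  thus ?thesis by simp
qed

end

context A4
begin

interpretation prob_space M by (rule P)
interpretation nu: prob_space \<nu> by (rule prob_nu)

lemma kernH_pos: "kernH d hh x y > 0" by (simp add: kernH_def)

lemma part_a1:
  assumes x0: "x0 \<in> unit_cube"
  shows "measure M {\<omega> \<in> space M. Bsum d (h n) X n x0 \<omega> \<le> real n * h n powr \<beta> / (2 * exp 1 * L)}
          \<le> exp (- (real n * h n powr \<beta>) / (8 * L))"
proof -
  define I where "I = {1..n+1}"
  define hh where "hh = h n"
  define q where "q = hh powr \<beta> / L"
  define c0 where "c0 = real n * q / 2"
  define T where "T = (\<lambda>\<omega>. \<lambda>j\<in>I. (X j \<omega>, Y j \<omega>))"
  define PP where "PP = PiM I (\<lambda>_. \<nu>)"
  define E where "E = {z \<in> space PP. (\<Sum>j\<in>I. kernH d hh x0 (fst (z j))) \<le> real n * hh powr \<beta> / (2 * exp 1 * L)}"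
  define D where "D = {y \<in> space \<nu>. d x0 (fst y) \<le> hh}"
  define g where "g = (\<lambda>j y. if j \<le> n then (if y \<in> D then 1/2 else 1) else (1::real))"
  define p where "p = measure \<nu> D"
  have hh: "hh > 0" using h_pos by (simp add: hh_def)
  have q0: "q \<ge> 0" using L_pos by (simp add: q_def)
  interpret PI: product_prob_space "\<lambda>_. \<nu>" by (rule prod_nu)
  have fin: "finite I" "I \<noteq> {}" "I \<subseteq> {1..}" by (auto simp: I_def)
  have Emeas: "E \<in> sets PP" unfolding E_def PP_def kernH_def by measurable
  have Dmeas: "D \<in> sets \<nu>" unfolding D_def by measurable
  note Dmeas[measurable]
  have "{\<omega> \<in> space M. Bsum d (h n) X n x0 \<omega> \<le> real n * h n powr \<beta> / (2 * exp 1 * L)} = T -` E \<inter> space M"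
    using measurable_space[OF T_meas[of I]]
    by (auto simp: E_def Bsum_def T_def I_def hh_def PP_def)
  hence "measure M {\<omega> \<in> space M. Bsum d (h n) X n x0 \<omega> \<le> real n * h n powr \<beta> / (2 * exp 1 * L)}
      = measure PP E"
    using measure_distr[OF T_meas[of I] Emeas[unfolded PP_def]] distr_PiM[OF fin]
    by (simp add: T_def PP_def)
  also have "\<dots> \<le> exp (- (real n * h n powr \<beta>) / (8 * L))"
  proof -
    have pq: "p \<ge> q"
    proof -
      have "p = measure M {\<omega> \<in> space M. d x0 (X 1 \<omega>) \<le> hh}"
        unfolding p_def \<nu>_def D_def using measurable_space[OF Z_meas[of 1]]
        by (subst measure_distr) (auto intro!: arg_cong[where f="measure M"])
      also have "\<dots> \<ge> hh powr \<beta> / L" by (rule small_ball[OF hh _ x0, of n]) (simp add: hh_def)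
      finally show ?thesis by (simp add: q_def)
    qed
    have p1: "p \<le> 1" by (simp add: p_def)
    have gint: "(\<integral>\<^sup>+ y. ennreal (g j y) \<partial>\<nu>) = ennreal (if j \<le> n then 1 - p/2 else 1)" for j
    proof (cases "j \<le> n")
      case True
      have "(\<integral>\<^sup>+ y. ennreal (g j y) \<partial>\<nu>) = (\<integral>\<^sup>+ y. ennreal (1 - 1/2 * indicator D y) \<partial>\<nu>)"
        by (intro nn_integral_cong) (auto simp: g_def True indicator_def)
      also have "\<dots> = ennreal (1 - p/2)"
      proof -
        have i1: "integrable \<nu> (\<lambda>y. (1::real))" by simp
        have i2: "integrable \<nu> (\<lambda>y. 1/2 * indicator D y :: real)"
          using Dmeas by (intro integrable_mult_right integrable_real_indicator) (auto simp: nu.emeasure_finite top.not_eq_extremum[symmetric])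
        have "(\<integral>\<^sup>+ y. ennreal (1 - 1/2 * indicator D y) \<partial>\<nu>) = ennreal (\<integral> y. (1 - 1/2 * indicator D y) \<partial>\<nu>)"
          by (rule nn_integral_eq_integral[OF Bochner_Integration.integrable_diff[OF i1 i2]]) (auto simp: indicator_def)
        also have "(\<integral> y. (1 - 1/2 * indicator D y) \<partial>\<nu>) = (\<integral>y. 1 \<partial>\<nu>) - (\<integral> y. 1/2 * indicator D y \<partial>\<nu>::real)"
          by (rule Bochner_Integration.integral_diff[OF i1 i2])
        also have "(\<integral>y. 1 \<partial>\<nu>) - (\<integral> y. 1/2 * indicator D y \<partial>\<nu>::real) = 1 - p/2"
          using Dmeas by (simp add: p_def nu.prob_space)
        finally show ?thesis .
      qed
      finally show ?thesis using True by simp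
    next
      case False
      thus ?thesis by (simp add: g_def nu.emeasure_space_1)
    qed
    have pw: "indicator E z \<le> ennreal (exp (c0 * ln 2) * (\<Prod>j\<in>I. g j (z j)))" if z: "z \<in> space PP" for z
    proof (cases "z \<in> E")
      case False thus ?thesis by simp
    next
      case True
      let ?H = "\<lambda>j. kernH d hh x0 (fst (z j))"
      have gl: "g j (z j) \<ge> exp (- ln 2 * exp 1 * ?H j)" if "j \<in> I" for j
      proof -
        have Hn: "?H j \<ge> 0" using kernH_pos[of hh x0] by (simp add: less_imp_le)
        show ?thesis
        proof (cases "j \<le> n \<and> z j \<in> D")
          case True
          hence "d x0 (fst (z j)) \<le> hh" by (simp add: D_def)
          hence "- d x0 (fst (z j)) / hh \<ge> -1" using hh by (simp add: field_simps)
          hence "?H j \<ge> exp (-1)" unfolding kernH_def by simp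
          hence "exp 1 * ?H j \<ge> 1" by (simp add: exp_minus field_simps)
          hence "- ln 2 * exp 1 * ?H j \<le> - ln 2" by (simp add: mult_le_cancel_left)
          hence "exp (- ln 2 * exp 1 * ?H j) \<le> exp (- ln 2)" by simp
          also have "exp (- ln 2) = (1/2::real)" by (simp add: exp_minus)
          finally show ?thesis using True by (simp add: g_def)
        next
          case False
          have "- ln 2 * exp 1 * ?H j \<le> 0" using Hn by (simp add: mult_nonneg_nonneg)
          hence "exp (- ln 2 * exp 1 * ?H j) \<le> 1" by simp
          thus ?thesis using False by (auto simp: g_def)
        qed
      qed
      have "(\<Prod>j\<in>I. g j (z j)) \<ge> (\<Prod>j\<in>I. exp (- ln 2 * exp 1 * ?H j))"
        by (intro prod_mono) (use gl in auto)
      also have "(\<Prod>j\<in>I. exp (- ln 2 * exp 1 * ?H j)) = exp (- ln 2 * exp 1 * (\<Sum>j\<in>I. ?H j))"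
        by (simp add: exp_sum[OF fin(1)] sum_distrib_left)
      also have "\<dots> \<ge> exp (- c0 * ln 2)"
      proof -
        have "(\<Sum>j\<in>I. ?H j) \<le> real n * hh powr \<beta> / (2 * exp 1 * L)" using True by (simp add: E_def)
        hence "exp 1 * (\<Sum>j\<in>I. ?H j) \<le> c0"
          using L_pos by (simp add: c0_def q_def field_simps)
        hence "ln 2 * (exp 1 * (\<Sum>j\<in>I. ?H j)) \<le> ln 2 * c0" by (simp add: mult_le_cancel_left)
        thus ?thesis by (simp add: algebra_simps)
      qed
      finally have "exp (- c0 * ln 2) \<le> (\<Prod>j\<in>I. g j (z j))" .
      hence "exp (c0 * ln 2) * exp (- c0 * ln 2) \<le> exp (c0 * ln 2) * (\<Prod>j\<in>I. g j (z j))"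
        by (simp add: mult_le_cancel_left)
      hence "1 \<le> exp (c0 * ln 2) * (\<Prod>j\<in>I. g j (z j))" by (simp add: exp_add[symmetric])
      thus ?thesis using True by simp
    qed
    have "emeasure PP E = (\<integral>\<^sup>+ z. indicator E z \<partial>PP)" using Emeas by simp
    also have "\<dots> \<le> (\<integral>\<^sup>+ z. ennreal (exp (c0 * ln 2) * (\<Prod>j\<in>I. g j (z j))) \<partial>PP)"
      by (intro nn_integral_mono) (use pw in auto)
    also have "\<dots> = (\<integral>\<^sup>+ z. ennreal (exp (c0 * ln 2)) * (\<Prod>j\<in>I. ennreal (g j (z j))) \<partial>PP)"
      by (intro nn_integral_cong) (simp add: ennreal_mult prod_ennreal g_def prod_nonneg)
    also have "\<dots> = ennreal (exp (c0 * ln 2)) * (\<integral>\<^sup>+ z. (\<Prod>j\<in>I. ennreal (g j (z j))) \<partial>PP)"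
      unfolding PP_def g_def D_def by (rule nn_integral_cmult) measurable
    also have "(\<integral>\<^sup>+ z. (\<Prod>j\<in>I. ennreal (g j (z j))) \<partial>PP) = (\<Prod>j\<in>I. \<integral>\<^sup>+ y. ennreal (g j y) \<partial>\<nu>)"
      unfolding PP_def by (rule PI.product_nn_integral_prod) (simp add: fin, unfold g_def, measurable)
    also have "\<dots> = (\<Prod>j\<in>I. ennreal (if j \<le> n then 1 - p/2 else 1))" by (simp add: gint)
    also have "\<dots> = ennreal (\<Prod>j\<in>I. (if j \<le> n then 1 - p/2 else 1))"
      using p1 by (intro prod_ennreal) auto
    also have "(\<Prod>j\<in>I. (if j \<le> n then 1 - p/2 else 1)) = (1 - p/2) ^ n"
    proof -
      have "(\<Prod>j\<in>I. (if j \<le> n then 1 - p/2 else (1::real))) = (\<Prod>j\<in>{1..n}. (1 - p/2))"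
      proof -
        have "{1..n+1} \<inter> {x. x \<le> n} = {1..n}" by auto
        thus ?thesis unfolding I_def by (subst prod.If_cases) auto
      qed
      thus ?thesis by simp
    qed
    also have "ennreal (exp (c0 * ln 2)) * ennreal ((1 - p/2) ^ n) = ennreal (exp (c0 * ln 2) * (1 - p/2) ^ n)"
      by (rule ennreal_mult[symmetric]) (use p1 in auto)
    finally have em: "emeasure PP E \<le> ennreal (exp (c0 * ln 2) * (1 - p/2) ^ n)" .
    have "(1 - p/2) ^ n \<le> exp (- q/2) ^ n"
    proof (rule power_mono)
      have "1 - p/2 \<le> exp (- p/2)" using exp_ge_add_one_self[of "-p/2"] by simp
      also have "\<dots> \<le> exp (-q/2)" using pq by simp
      finally show "1 - p/2 \<le> exp (-q/2)" .
    qed (use p1 in simp)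
    hence "exp (c0 * ln 2) * (1 - p/2) ^ n \<le> exp (c0 * ln 2) * exp (- q/2) ^ n"
      by (simp add: mult_le_cancel_left)
    also have "\<dots> = exp (real n * q * (ln 2 - 1) / 2)"
      by (simp add: c0_def exp_of_nat_mult[symmetric] exp_add[symmetric] algebra_simps diff_divide_distrib)
    also have "\<dots> \<le> exp (- (real n * q) / 8)"
    proof -
      have "real n * q \<ge> 0" using q0 by simp
      hence "real n * q * (ln 2 - 1) \<le> real n * q * (-1/4)" using ln2_le by (intro mult_left_mono) auto
      thus ?thesis by (simp add: mult.commute)
    qed
    also have "\<dots> = exp (- (real n * h n powr \<beta>) / (8 * L))" by (simp add: q_def hh_def)
    finally have b: "exp (c0 * ln 2) * (1 - p/2) ^ n \<le> exp (- (real n * h n powr \<beta>) / (8 * L))" .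
    have "measure PP E = enn2real (emeasure PP E)" by (simp add: measure_def)
    also have "\<dots> \<le> exp (c0 * ln 2) * (1 - p/2) ^ n"
      using em by (intro enn2real_leI) (use p1 in auto)
    finally show ?thesis using b by simp
  qed
  finally show ?thesis .
qed

end

context A4
begin

lemma gap_bounds:
  assumes x: "x \<in> unit_cube" and x0: "x0 \<in> unit_cube"
  shows "cdf_gap F x x0 \<le> L * d x0 x" "cdf_gap F x x0 \<le> 1" "0 \<le> cdf_gap F x x0"
proof -
  have b1: "\<bar>F x v - F x0 v\<bar> \<le> 1" for v
    using F_bounds[OF x, of v] F_bounds[OF x0, of v] by auto
  have b2: "\<bar>F x v - F x0 v\<bar> \<le> L * d x0 x" for v
    using lip[OF x0 x, of v] by (simp add: abs_minus_commute)
  show "cdf_gap F x x0 \<le> L * d x0 x" unfolding cdf_gap_def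
    by (rule cSUP_least) (use b2 in auto)
  show "cdf_gap F x x0 \<le> 1" unfolding cdf_gap_def
    by (rule cSUP_least) (use b1 in auto)
  have "bdd_above (range (\<lambda>v. \<bar>F x v - F x0 v\<bar>))"
    by (rule bdd_aboveI[where M=1]) (use b1 in auto)
  hence "\<bar>F x 0 - F x0 0\<bar> \<le> cdf_gap F x x0" unfolding cdf_gap_def
    by (rule cSUP_upper[OF UNIV_I])
  thus "0 \<le> cdf_gap F x x0" by linarith
qed

lemma det_bound:
  assumes n: "n \<ge> 1" and hh: "0 < hh" "hh \<le> exp (-1)" and x0: "x0 \<in> unit_cube"
    and xs: "\<And>j. j \<in> {1..n+1} \<Longrightarrow> xs j \<in> unit_cube"
  shows "(\<Sum>i\<in>{1..n}. kernH d hh x0 (xs i) * cdf_gap F (xs i) x0)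
           / max (\<Sum>j\<in>{1..n+1}. kernH d hh x0 (xs j)) (real n * hh powr \<beta>)
         \<le> (L * (1 + \<beta>) + 1) * hh * ln (1 / hh)"
proof -
  define t where "t = (1 + \<beta>) * hh * ln (1 / hh)"
  define B where "B = (\<Sum>j\<in>{1..n+1}. kernH d hh x0 (xs j))"
  define Mx where "Mx = max B (real n * hh powr \<beta>)"
  have ln1: "ln (1 / hh) \<ge> 1"
  proof -
    have "1 / hh \<ge> exp 1" using hh by (simp add: exp_minus field_simps)
    thus ?thesis using hh by (subst ln_ge_iff) auto
  qed
  have l0: "0 \<le> ln (1/hh)" using ln1 by linarith
  have t0: "t \<ge> 0" unfolding t_def
    by (meson l0 hh(1) beta_nonneg less_imp_le mult_nonneg_nonneg add_nonneg_nonneg zero_le_one)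
  have Hpos: "kernH d hh x0 y > 0" for y by (simp add: kernH_def)
  have B0: "B \<ge> 0" unfolding B_def by (intro sum_nonneg) (simp add: less_imp_le Hpos)
  have np: "real n * hh powr \<beta> > 0" using n hh by simp
  hence Mx0: "Mx > 0" by (simp add: Mx_def)
  have et: "exp (- t / hh) = hh * hh powr \<beta>"
  proof -
    have "- t / hh = (1 + \<beta>) * ln hh" using hh by (simp add: t_def ln_div)
    hence "exp (- t / hh) = hh powr (1 + \<beta>)" using hh by (simp add: powr_def)
    also have "\<dots> = hh * hh powr \<beta>" using hh by (simp add: powr_add)
    finally show ?thesis .
  qed
  have termb: "kernH d hh x0 (xs i) * cdf_gap F (xs i) x0 \<le> L * t * kernH d hh x0 (xs i) + hh * hh powr \<beta>"
    if i: "i \<in> {1..n}" for i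
  proof -
    have xi: "xs i \<in> unit_cube" using xs i by auto
    note gb = gap_bounds[OF xi x0]
    let ?H = "kernH d hh x0 (xs i)"
    have H0: "?H \<ge> 0" using Hpos[of "xs i"] by simp
    show ?thesis
    proof (cases "d x0 (xs i) \<le> t")
      case True
      have "?H * cdf_gap F (xs i) x0 \<le> ?H * (L * t)"
        using gb(1) True L_pos H0 by (intro mult_left_mono) (auto intro: order_trans mult_left_mono)
      moreover have "hh * hh powr \<beta> \<ge> 0" using hh by simp
      ultimately show ?thesis by (simp add: algebra_simps)
    next
      case False
      have "?H * cdf_gap F (xs i) x0 \<le> ?H" using gb(2) H0 by (simp add: mult_left_le)
      also have "?H \<le> exp (- t / hh)" unfolding kernH_def using False hh by (simp add: divide_right_mono)
      also have "\<dots> = hh * hh powr \<beta>" by (rule et)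
      finally show ?thesis using L_pos t0 H0 by (simp add: add_increasing)
    qed
  qed
  have "(\<Sum>i\<in>{1..n}. kernH d hh x0 (xs i) * cdf_gap F (xs i) x0)
        \<le> (\<Sum>i\<in>{1..n}. L * t * kernH d hh x0 (xs i) + hh * hh powr \<beta>)"
    by (rule sum_mono) (rule termb)
  also have "\<dots> = L * t * (\<Sum>i\<in>{1..n}. kernH d hh x0 (xs i)) + hh * (real n * hh powr \<beta>)"
    by (simp add: sum.distrib sum_distrib_left algebra_simps)
  also have "(\<Sum>i\<in>{1..n}. kernH d hh x0 (xs i)) \<le> B"
    unfolding B_def by (rule sum_mono2) (auto simp: less_imp_le Hpos)
  hence "L * t * (\<Sum>i\<in>{1..n}. kernH d hh x0 (xs i)) \<le> L * t * Mx"
    using L_pos t0 by (intro mult_left_mono) (auto simp: Mx_def)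
  hence "L * t * (\<Sum>i\<in>{1..n}. kernH d hh x0 (xs i)) + hh * (real n * hh powr \<beta>) \<le> L * t * Mx + hh * Mx"
  proof -
    have "hh * (real n * hh powr \<beta>) \<le> hh * Mx" using hh by (intro mult_left_mono) (auto simp: Mx_def)
    thus ?thesis using \<open>L * t * (\<Sum>i\<in>{1..n}. kernH d hh x0 (xs i)) \<le> L * t * Mx\<close> by linarith
  qed
  finally have "(\<Sum>i\<in>{1..n}. kernH d hh x0 (xs i) * cdf_gap F (xs i) x0) / Mx \<le> (L * t * Mx + hh * Mx) / Mx"
    using Mx0 by (intro divide_right_mono) auto
  also have "\<dots> = L * t + hh" using Mx0 by (simp add: field_simps)
  also have "\<dots> \<le> (L * (1 + \<beta>) + 1) * hh * ln (1 / hh)"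
    using ln1 hh by (simp add: t_def algebra_simps)
  finally show ?thesis by (simp add: Mx_def B_def)
qed

lemma part_b:
  "\<exists>C>0. \<exists>N. \<forall>n\<ge>N. \<forall>x0\<in>unit_cube. AE \<omega> in M.
          Delta_sum d (h n) F X n x0 \<omega> / max (Bsum d (h n) X n x0 \<omega>) (real n * h n powr \<beta>)
            \<le> C * h n * ln (1 / h n)"
proof -
  have "eventually (\<lambda>n. h n < exp (-1)) sequentially"
    by (rule order_tendstoD(2)[OF h_lim]) simp
  then obtain N0 where N0: "\<And>n. n \<ge> N0 \<Longrightarrow> h n < exp (-1)"
    unfolding eventually_sequentially by blast
  have C0: "L * (1 + \<beta>) + 1 > 0" using L_pos beta_nonneg by (simp add: add_pos_nonneg)
  show ?thesis
  proof (intro exI[of _ "L * (1 + \<beta>) + 1"] conjI C0 exI[of _ "max N0 1"] allI impI ballI)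
    fix n and x0 :: "real^'p" assume n: "max N0 1 \<le> n" and x0: "x0 \<in> unit_cube"
    have "AE \<omega> in M. \<forall>j\<in>{1..n+1}. X j \<omega> \<in> unit_cube"
      by (rule AE_finite_allI) (auto intro: AE_cube)
    thus "AE \<omega> in M. Delta_sum d (h n) F X n x0 \<omega> / max (Bsum d (h n) X n x0 \<omega>) (real n * h n powr \<beta>)
            \<le> (L * (1 + \<beta>) + 1) * h n * ln (1 / h n)"
    proof (rule AE_mp, intro AE_I2 impI)
      fix \<omega> assume "\<forall>j\<in>{1..n+1}. X j \<omega> \<in> unit_cube"
      thus "Delta_sum d (h n) F X n x0 \<omega> / max (Bsum d (h n) X n x0 \<omega>) (real n * h n powr \<beta>)
            \<le> (L * (1 + \<beta>) + 1) * h n * ln (1 / h n)"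
        unfolding Delta_sum_def Bsum_def
        using det_bound[of n "h n" x0 "\<lambda>j. X j \<omega>"] n N0[of n] h_pos[of n] x0 by auto
    qed
  qed
qed

end

lemma hoeff_pt_pos:
  fixes p t :: real
  assumes "0 \<le> p" "p \<le> 1" "t \<ge> 0"
  shows "p * exp (t * (1 - p)) + (1 - p) * exp (- t * p) \<le> exp (t\<^sup>2 / 8)"
proof -
  have pos: "1 + p * (exp t - 1) > 0"
    using assms by (intro add_pos_nonneg mult_nonneg_nonneg) auto
  have "p * exp (t * (1 - p)) + (1 - p) * exp (- t * p) = exp (- t * p) * (1 + p * (exp t - 1))"
    by (simp add: algebra_simps exp_add[symmetric] exp_diff)
  also have "\<dots> = exp (- t * p + ln (1 + p * (exp t - 1)))"
    using pos by (simp add: exp_diff exp_minus field_simps)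
  also have "\<dots> \<le> exp (t\<^sup>2 / 8)"
    using Hoeffdings_lemma_aux[of t p] assms by simp
  finally show ?thesis .
qed

lemma hoeff_pt:
  fixes p t :: real
  assumes "0 \<le> p" "p \<le> 1"
  shows "p * exp (t * (1 - p)) + (1 - p) * exp (- t * p) \<le> exp (t\<^sup>2 / 8)"
proof (cases "t \<ge> 0")
  case True thus ?thesis using hoeff_pt_pos assms by blast
next
  case False
  have "(1 - p) * exp ((- t) * (1 - (1 - p))) + (1 - (1 - p)) * exp (- (- t) * (1 - p)) \<le> exp ((- t)\<^sup>2 / 8)"
    using False assms by (intro hoeff_pt_pos) auto
  thus ?thesis by (simp add: algebra_simps)
qed

context A4
begin

interpretation prob_space M by (rule P)
interpretation nu: prob_space \<nu> by (rule prob_nu)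

definition "Fc x v = (if x \<in> unit_cube then F x v else 0)"

lemma Fc_bounds: "0 \<le> Fc x v" "Fc x v \<le> 1"
  using F_bounds[of x v] by (auto simp: Fc_def)

lemma Fc_meas1 [measurable]: "(\<lambda>x. Fc x v) \<in> borel_measurable borel"
  unfolding Fc_def using F_meas[of v] by measurable

lemma Fc_cont: "x \<in> unit_cube \<Longrightarrow> isCont (Fc x) v"
proof -
  assume x: "x \<in> unit_cube"
  have "continuous_on UNIV (F x)" using F_cdf[OF x] by auto
  hence "isCont (F x) v" by (simp add: continuous_on_eq_continuous_at)
  moreover have "Fc x = F x" using x by (auto simp: Fc_def)
  ultimately show ?thesis by simp
qed

lemma Fc_meas_pair: "(\<lambda>p. Fc (fst p) (snd p)) \<in> borel_measurable (borel \<Otimes>\<^sub>M borel)"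
proof (rule borel_measurable_LIMSEQ_real)
  define u where "u = (\<lambda>m (p :: (real^'p) \<times> real).
      Fc (fst p) (real_of_int \<lceil>real (Suc m) * snd p\<rceil> / real (Suc m)))"
  show "u m \<in> borel_measurable (borel \<Otimes>\<^sub>M borel)" for m
  proof -
    have "(\<lambda>p. (\<lambda>(k::int) p. Fc (fst p) (real_of_int k / real (Suc m))) (\<lceil>real (Suc m) * snd p\<rceil>) p)
        \<in> borel_measurable (borel \<Otimes>\<^sub>M borel)"
      by (rule measurable_compose_countable'[where I=UNIV and f="\<lambda>k p. Fc (fst p) (real_of_int k / real (Suc m))"
          and g="\<lambda>p. \<lceil>real (Suc m) * snd p\<rceil>"]) auto
    thus ?thesis by (simp add: u_def)
  qed
  fix p :: "(real^'p) \<times> real"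
  obtain x v where p: "p = (x, v)" by (cases p)
  show "(\<lambda>m. u m p) \<longlonglongrightarrow> Fc (fst p) (snd p)"
  proof (cases "x \<in> unit_cube")
    case False thus ?thesis by (simp add: u_def p Fc_def)
  next
    case True
    have lim: "(\<lambda>m. real_of_int \<lceil>real (Suc m) * v\<rceil> / real (Suc m)) \<longlonglongrightarrow> v"
    proof (rule tendsto_sandwich[of "\<lambda>_. v" _ _ "\<lambda>m. v + inverse (real (Suc m))"])
      show "\<forall>\<^sub>F m in sequentially. v \<le> real_of_int \<lceil>real (Suc m) * v\<rceil> / real (Suc m)"
        by (intro always_eventually allI) (simp add: field_simps)
      show "\<forall>\<^sub>F m in sequentially. real_of_int \<lceil>real (Suc m) * v\<rceil> / real (Suc m) \<le> v + inverse (real (Suc m))"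
      proof (intro always_eventually allI)
        fix m
        have "real_of_int \<lceil>real (Suc m) * v\<rceil> \<le> real (Suc m) * v + 1" by linarith
        thus "real_of_int \<lceil>real (Suc m) * v\<rceil> / real (Suc m) \<le> v + inverse (real (Suc m))"
          by (simp add: field_simps del: of_nat_Suc)
      qed
      show "(\<lambda>m. v + inverse (real (Suc m))) \<longlonglongrightarrow> v"
        using tendsto_add[OF tendsto_const LIMSEQ_inverse_real_of_nat, of v] by simp
    qed simp
    show ?thesis
      unfolding u_def p fst_conv snd_conv by (rule isCont_tendsto_compose[OF Fc_cont[OF True] lim])
  qed
qed

lemma Fc_meas' [measurable (raw)]:
  assumes "f \<in> N \<rightarrow>\<^sub>M borel" "g \<in> N \<rightarrow>\<^sub>M borel"
  shows "(\<lambda>z. Fc (f z) (g z)) \<in> borel_measurable N"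
proof -
  have "(\<lambda>z. (f z, g z)) \<in> N \<rightarrow>\<^sub>M borel \<Otimes>\<^sub>M borel" using assms by measurable
  from measurable_compose[OF this Fc_meas_pair] show ?thesis by simp
qed

end

context A4
begin

interpretation prob_space M by (rule P)
interpretation nu: prob_space \<nu> by (rule prob_nu)

lemma VZ_meas [measurable]: "(\<lambda>\<omega>. V (X i \<omega>, Y i \<omega>)) \<in> borel_measurable M"
  using measurable_compose[OF Z_meas meas_V] by simp

lemma V_meas [measurable]: "V \<in> borel_measurable (borel \<Otimes>\<^sub>M MY)"
  by (rule meas_V)

lemma F_lt:
  assumes A: "A \<in> sets borel"
  shows "measure M {\<omega> \<in> space M. X 1 \<omega> \<in> A \<and> V (X 1 \<omega>, Y 1 \<omega>) < v}
       = (\<integral>x. indicator A x * Fc x v \<partial>(distr M borel (X 1)))"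
proof -
  define S where "S = (\<lambda>k::nat. {\<omega> \<in> space M. X 1 \<omega> \<in> A \<and> V (X 1 \<omega>, Y 1 \<omega>) \<le> v - inverse (real (Suc k))})"
  have Sk: "S k \<in> sets M" for k unfolding S_def using A by measurable
  hence Smeas: "range S \<subseteq> sets M" by auto
  have inc: "incseq S"
  proof (rule incseq_SucI)
    fix k
    have "inverse (real (Suc (Suc k))) \<le> inverse (real (Suc k))" by (simp add: field_simps)
    hence "\<And>w::real. w \<le> v - inverse (real (Suc k)) \<Longrightarrow> w \<le> v - inverse (real (Suc (Suc k)))"
      by linarith
    thus "S k \<subseteq> S (Suc k)" unfolding S_def by blast
  qed
  have U: "(\<Union>k. S k) = {\<omega> \<in> space M. X 1 \<omega> \<in> A \<and> V (X 1 \<omega>, Y 1 \<omega>) < v}"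
  proof safe
    fix \<omega> k assume "\<omega> \<in> S k"
    hence h: "\<omega> \<in> space M" "X 1 \<omega> \<in> A" "V (X 1 \<omega>, Y 1 \<omega>) \<le> v - inverse (real (Suc k))"
      unfolding S_def by auto
    have "inverse (real (Suc k)) > 0" by simp
    with h show "V (X 1 \<omega>, Y 1 \<omega>) < v" "\<omega> \<in> space M" "X 1 \<omega> \<in> A" by linarith+
  next
    fix \<omega> assume "\<omega> \<in> space M" "X 1 \<omega> \<in> A" "V (X 1 \<omega>, Y 1 \<omega>) < v"
    then obtain k where "inverse (real (Suc k)) < v - V (X 1 \<omega>, Y 1 \<omega>)"
      using reals_Archimedean[of "v - V (X 1 \<omega>, Y 1 \<omega>)"] by auto
    hence "V (X 1 \<omega>, Y 1 \<omega>) \<le> v - inverse (real (Suc k))" by linarith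
    hence "\<omega> \<in> S k" using \<open>\<omega> \<in> space M\<close> \<open>X 1 \<omega> \<in> A\<close> unfolding S_def by blast
    thus "\<omega> \<in> (\<Union>k. S k)" by blast
  qed
  have lim1: "(\<lambda>k. measure M (S k)) \<longlonglongrightarrow> measure M {\<omega> \<in> space M. X 1 \<omega> \<in> A \<and> V (X 1 \<omega>, Y 1 \<omega>) < v}"
    using finite_Lim_measure_incseq[OF Smeas inc] U by simp
  define N where "N = distr M borel (X 1)"
  interpret N: prob_space N unfolding N_def by (rule prob_space_distr) (rule meas_X)
  have AEN: "AE x in N. x \<in> unit_cube"
    unfolding N_def by (subst AE_distr_iff) (use support in auto)
  have eqS: "measure M (S k) = (\<integral>x. indicator A x * F x (v - inverse (real (Suc k))) \<partial>N)" for k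
    unfolding S_def using F_cond[OF A, of "v - inverse (real (Suc k))"]
    by (simp add: set_lebesgue_integral_def N_def)
  have lim2: "(\<lambda>k. (\<integral>x. indicator A x * F x (v - inverse (real (Suc k))) \<partial>N)) \<longlonglongrightarrow> (\<integral>x. indicator A x * Fc x v \<partial>N)"
  proof (rule integral_dominated_convergence[where w="\<lambda>_. 1"])
    show "(\<lambda>x. indicator A x * Fc x v) \<in> borel_measurable N" unfolding N_def using A by measurable
    show "(\<lambda>x. indicator A x * F x (v - inverse (real (Suc k)))) \<in> borel_measurable N" for k
      unfolding N_def using A F_meas by measurable
    show "integrable N (\<lambda>_. 1::real)" by simp
    show "AE x in N. (\<lambda>k. indicator A x * F x (v - inverse (real (Suc k)))) \<longlonglongrightarrow> indicator A x * Fc x v"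
    proof (rule AE_mp[OF AEN], intro AE_I2 impI)
      fix x :: "real^'p" assume x: "x \<in> unit_cube"
      have l: "(\<lambda>k. v - inverse (real (Suc k))) \<longlonglongrightarrow> v"
        using tendsto_diff[OF tendsto_const LIMSEQ_inverse_real_of_nat, of v] by simp
      have "(\<lambda>k. Fc x (v - inverse (real (Suc k)))) \<longlonglongrightarrow> Fc x v"
        by (rule isCont_tendsto_compose[OF Fc_cont[OF x] l])
      hence "(\<lambda>k. F x (v - inverse (real (Suc k)))) \<longlonglongrightarrow> Fc x v" using x by (simp add: Fc_def)
      thus "(\<lambda>k. indicator A x * F x (v - inverse (real (Suc k)))) \<longlonglongrightarrow> indicator A x * Fc x v"
        by (intro tendsto_mult tendsto_const)
    qed
    show "AE x in N. norm (indicator A x * F x (v - inverse (real (Suc k)))) \<le> 1" for k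
    proof (rule AE_mp[OF AEN], intro AE_I2 impI)
      fix x :: "real^'p" assume x: "x \<in> unit_cube"
      show "norm (indicator A x * F x (v - inverse (real (Suc k)))) \<le> 1"
        using F_bounds[OF x, of "v - inverse (real (Suc k))"] by (auto simp: indicator_def)
    qed
  qed
  show ?thesis using LIMSEQ_unique[OF lim1] lim2 eqS by (simp add: N_def)
qed

end

context A4
begin

interpretation prob_space M by (rule P)
interpretation nu: prob_space \<nu> by (rule prob_nu)

lemma nuX: "distr \<nu> borel fst = distr M borel (X 1)"
proof -
  have "distr \<nu> borel fst = distr M borel (fst \<circ> (\<lambda>\<omega>. (X 1 \<omega>, Y 1 \<omega>)))"
    unfolding \<nu>_def by (rule distr_distr) measurable
  thus ?thesis by (simp add: o_def)
qed

lemma disint: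
  fixes g :: "real^'p \<Rightarrow> ennreal" and r :: "real^'p \<Rightarrow> real"
  assumes D[measurable]: "D \<in> sets \<nu>" and r[measurable]: "r \<in> borel_measurable borel"
    and g[measurable]: "g \<in> borel_measurable borel"
    and eq: "\<And>A. A \<in> sets borel \<Longrightarrow>
      emeasure \<nu> ({y \<in> space \<nu>. fst y \<in> A} \<inter> D) = (\<integral>\<^sup>+u. ennreal (r u) * indicator A u \<partial>(distr M borel (X 1)))"
  shows "(\<integral>\<^sup>+ y. g (fst y) * indicator D y \<partial>\<nu>) = (\<integral>\<^sup>+ y. ennreal (r (fst y)) * g (fst y) \<partial>\<nu>)"
proof -
  define NX where "NX = distr M borel (X 1)"
  have meq: "distr (density \<nu> (indicator D)) borel fst = density NX (\<lambda>u. ennreal (r u))"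
  proof (rule measure_eqI)
    show "sets (distr (density \<nu> (indicator D)) borel fst) = sets (density NX (\<lambda>u. ennreal (r u)))"
      by (simp add: NX_def)
    fix A assume "A \<in> sets (distr (density \<nu> (indicator D)) borel fst)"
    hence A[measurable]: "A \<in> sets borel" by simp
    have S[measurable]: "fst -` A \<inter> space \<nu> \<in> sets \<nu>" by measurable
    have "emeasure (distr (density \<nu> (indicator D)) borel fst) A = emeasure (density \<nu> (indicator D)) (fst -` A \<inter> space \<nu>)"
      by (subst emeasure_distr) (auto)
    also have "\<dots> = (\<integral>\<^sup>+ y. indicator D y * indicator (fst -` A \<inter> space \<nu>) y \<partial>\<nu>)"
      by (rule emeasure_density) auto
    also have "\<dots> = (\<integral>\<^sup>+ y. indicator ((fst -` A \<inter> space \<nu>) \<inter> D) y \<partial>\<nu>)"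
      by (intro nn_integral_cong) (auto simp: indicator_def)
    also have "\<dots> = emeasure \<nu> ((fst -` A \<inter> space \<nu>) \<inter> D)" by simp
    also have "(fst -` A \<inter> space \<nu>) \<inter> D = {y \<in> space \<nu>. fst y \<in> A} \<inter> D" by auto
    also have "emeasure \<nu> \<dots> = (\<integral>\<^sup>+u. ennreal (r u) * indicator A u \<partial>NX)" unfolding NX_def by (rule eq[OF A])
    also have "\<dots> = emeasure (density NX (\<lambda>u. ennreal (r u))) A"
      by (rule emeasure_density[symmetric]) (auto simp: NX_def)
    finally show "emeasure (distr (density \<nu> (indicator D)) borel fst) A = emeasure (density NX (\<lambda>u. ennreal (r u))) A" .
  qed
  have "(\<integral>\<^sup>+ y. g (fst y) * indicator D y \<partial>\<nu>) = (\<integral>\<^sup>+ y. indicator D y * g (fst y) \<partial>\<nu>)"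
    by (simp add: mult.commute)
  also have "\<dots> = (\<integral>\<^sup>+ y. g (fst y) \<partial>density \<nu> (indicator D))"
    by (rule nn_integral_density[symmetric]) auto
  also have "\<dots> = (\<integral>\<^sup>+ u. g u \<partial>distr (density \<nu> (indicator D)) borel fst)"
    by (rule nn_integral_distr[symmetric]) auto
  also have "\<dots> = (\<integral>\<^sup>+ u. g u \<partial>density NX (\<lambda>u. ennreal (r u)))" by (simp add: meq)
  also have "\<dots> = (\<integral>\<^sup>+ u. ennreal (r u) * g u \<partial>NX)"
    by (rule nn_integral_density) (auto simp: NX_def)
  also have "\<dots> = (\<integral>\<^sup>+ u. ennreal (r u) * g u \<partial>distr \<nu> borel fst)" by (simp add: NX_def nuX)
  also have "\<dots> = (\<integral>\<^sup>+ y. ennreal (r (fst y)) * g (fst y) \<partial>\<nu>)"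
    by (rule nn_integral_distr) auto
  finally show ?thesis .
qed

lemma nu_set:
  assumes A[measurable]: "A \<in> sets borel" and P[measurable]: "Measurable.pred \<nu> Q"
  shows "emeasure \<nu> ({y \<in> space \<nu>. fst y \<in> A} \<inter> {y \<in> space \<nu>. Q y})
     = emeasure M {\<omega> \<in> space M. X 1 \<omega> \<in> A \<and> Q (X 1 \<omega>, Y 1 \<omega>)}"
proof -
  have "{y \<in> space \<nu>. fst y \<in> A} \<inter> {y \<in> space \<nu>. Q y} = {y \<in> space \<nu>. fst y \<in> A \<and> Q y}" by auto
  moreover have "{y \<in> space \<nu>. fst y \<in> A \<and> Q y} \<in> sets \<nu>" by measurable
  ultimately show ?thesis
    unfolding \<nu>_def using measurable_space[OF Z_meas[of 1]]
    by (subst emeasure_distr) (auto simp: \<nu>_def intro!: arg_cong[where f="emeasure M"])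
qed

lemma int_lt:
  fixes g :: "real^'p \<Rightarrow> ennreal"
  assumes g[measurable]: "g \<in> borel_measurable borel"
  shows "(\<integral>\<^sup>+ y. g (fst y) * indicator {y \<in> space \<nu>. V y < v} y \<partial>\<nu>)
       = (\<integral>\<^sup>+ y. ennreal (Fc (fst y) v) * g (fst y) \<partial>\<nu>)"
proof (rule disint)
  show "{y \<in> space \<nu>. V y < v} \<in> sets \<nu>" by measurable
  fix A :: "(real^'p) set" assume A[measurable]: "A \<in> sets borel"
  have "emeasure \<nu> ({y \<in> space \<nu>. fst y \<in> A} \<inter> {y \<in> space \<nu>. V y < v})
      = emeasure M {\<omega> \<in> space M. X 1 \<omega> \<in> A \<and> V (X 1 \<omega>, Y 1 \<omega>) < v}"
    by (rule nu_set) auto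
  also have "\<dots> = ennreal (measure M {\<omega> \<in> space M. X 1 \<omega> \<in> A \<and> V (X 1 \<omega>, Y 1 \<omega>) < v})"
    by (rule emeasure_eq_measure)
  also have "\<dots> = ennreal (\<integral>x. indicator A x * Fc x v \<partial>(distr M borel (X 1)))" unfolding F_lt[OF A] ..
  also have "\<dots> = (\<integral>\<^sup>+x. ennreal (indicator A x * Fc x v) \<partial>(distr M borel (X 1)))"
  proof (rule nn_integral_eq_integral[symmetric])
    interpret N: prob_space "distr M borel (X 1)" by (rule prob_space_distr) (rule meas_X)
    show "integrable (distr M borel (X 1)) (\<lambda>x. indicator A x * Fc x v)"
      by (rule N.integrable_const_bound[where B=1]) (auto simp: indicator_def Fc_bounds)
  qed (auto simp: Fc_bounds)
  also have "\<dots> = (\<integral>\<^sup>+x. ennreal (Fc x v) * indicator A x \<partial>(distr M borel (X 1)))"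
    by (intro nn_integral_cong) (auto simp: indicator_def)
  finally show "emeasure \<nu> ({y \<in> space \<nu>. fst y \<in> A} \<inter> {y \<in> space \<nu>. V y < v})
      = (\<integral>\<^sup>+x. ennreal (Fc x v) * indicator A x \<partial>(distr M borel (X 1)))" .
qed auto

lemma int_ge:
  fixes g :: "real^'p \<Rightarrow> ennreal"
  assumes g[measurable]: "g \<in> borel_measurable borel"
  shows "(\<integral>\<^sup>+ y. g (fst y) * indicator {y \<in> space \<nu>. \<not> V y < v} y \<partial>\<nu>)
       = (\<integral>\<^sup>+ y. ennreal (1 - Fc (fst y) v) * g (fst y) \<partial>\<nu>)"
proof (rule disint)
  show "{y \<in> space \<nu>. \<not> V y < v} \<in> sets \<nu>" by measurable
  fix A :: "(real^'p) set" assume A[measurable]: "A \<in> sets borel"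
  interpret N: prob_space "distr M borel (X 1)" by (rule prob_space_distr) (rule meas_X)
  have "emeasure \<nu> ({y \<in> space \<nu>. fst y \<in> A} \<inter> {y \<in> space \<nu>. \<not> V y < v})
      = emeasure M {\<omega> \<in> space M. X 1 \<omega> \<in> A \<and> \<not> V (X 1 \<omega>, Y 1 \<omega>) < v}"
    by (rule nu_set) auto
  also have "\<dots> = ennreal (measure M {\<omega> \<in> space M. X 1 \<omega> \<in> A \<and> \<not> V (X 1 \<omega>, Y 1 \<omega>) < v})"
    by (rule emeasure_eq_measure)
  also have "measure M {\<omega> \<in> space M. X 1 \<omega> \<in> A \<and> \<not> V (X 1 \<omega>, Y 1 \<omega>) < v}
      = measure M {\<omega> \<in> space M. X 1 \<omega> \<in> A} - measure M {\<omega> \<in> space M. X 1 \<omega> \<in> A \<and> V (X 1 \<omega>, Y 1 \<omega>) < v}"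
  proof -
    have eqs: "{\<omega> \<in> space M. X 1 \<omega> \<in> A \<and> \<not> V (X 1 \<omega>, Y 1 \<omega>) < v}
        = {\<omega> \<in> space M. X 1 \<omega> \<in> A} - {\<omega> \<in> space M. X 1 \<omega> \<in> A \<and> V (X 1 \<omega>, Y 1 \<omega>) < v}" by auto
    have m1: "{\<omega> \<in> space M. X 1 \<omega> \<in> A} \<in> events" by measurable
    have m2: "{\<omega> \<in> space M. X 1 \<omega> \<in> A \<and> V (X 1 \<omega>, Y 1 \<omega>) < v} \<in> events" by measurable
    have sub: "{\<omega> \<in> space M. X 1 \<omega> \<in> A \<and> V (X 1 \<omega>, Y 1 \<omega>) < v} \<subseteq> {\<omega> \<in> space M. X 1 \<omega> \<in> A}" by auto
    show ?thesis unfolding eqs by (rule finite_measure_Diff[OF m1 m2 sub])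
  qed
  also have "measure M {\<omega> \<in> space M. X 1 \<omega> \<in> A} = (\<integral>x. indicator A x \<partial>(distr M borel (X 1)))"
  proof -
    have "(\<integral>x. indicator A x \<partial>(distr M borel (X 1))) = measure (distr M borel (X 1)) A"
      using sets.sets_into_space[OF A] by (simp add: Int_absorb2)
    also have "\<dots> = measure M (X 1 -` A \<inter> space M)" by (rule measure_distr) auto
    also have "X 1 -` A \<inter> space M = {\<omega> \<in> space M. X 1 \<omega> \<in> A}" by auto
    finally show ?thesis by simp
  qed
  also have "(\<integral>x. indicator A x \<partial>(distr M borel (X 1))) - measure M {\<omega> \<in> space M. X 1 \<omega> \<in> A \<and> V (X 1 \<omega>, Y 1 \<omega>) < v}
      = (\<integral>x. indicator A x * (1 - Fc x v) \<partial>(distr M borel (X 1)))"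
  proof -
    have i1: "integrable (distr M borel (X 1)) (\<lambda>x. indicator A x :: real)"
      by (rule N.integrable_const_bound[where B=1]) (auto simp: indicator_def)
    have i2: "integrable (distr M borel (X 1)) (\<lambda>x. indicator A x * Fc x v)"
      by (rule N.integrable_const_bound[where B=1]) (auto simp: indicator_def Fc_bounds)
    have "(\<integral>x. indicator A x * (1 - Fc x v) \<partial>(distr M borel (X 1)))
        = (\<integral>x. indicator A x - indicator A x * Fc x v \<partial>(distr M borel (X 1)))"
      by (simp add: algebra_simps)
    also have "\<dots> = (\<integral>x. indicator A x \<partial>(distr M borel (X 1))) - (\<integral>x. indicator A x * Fc x v \<partial>(distr M borel (X 1)))"
      by (rule Bochner_Integration.integral_diff[OF i1 i2])
    finally show ?thesis unfolding F_lt[OF A] by simp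
  qed
  also have "ennreal \<dots> = (\<integral>\<^sup>+x. ennreal (indicator A x * (1 - Fc x v)) \<partial>(distr M borel (X 1)))"
  proof (rule nn_integral_eq_integral[symmetric])
    show "integrable (distr M borel (X 1)) (\<lambda>x. indicator A x * (1 - Fc x v))"
      by (rule N.integrable_const_bound[where B=1]) (auto simp: indicator_def Fc_bounds)
  qed (auto simp: Fc_bounds)
  also have "\<dots> = (\<integral>\<^sup>+x. ennreal (1 - Fc x v) * indicator A x \<partial>(distr M borel (X 1)))"
    by (intro nn_integral_cong) (auto simp: indicator_def)
  finally show "emeasure \<nu> ({y \<in> space \<nu>. fst y \<in> A} \<inter> {y \<in> space \<nu>. \<not> V y < v})
      = (\<integral>\<^sup>+x. ennreal (1 - Fc x v) * indicator A x \<partial>(distr M borel (X 1)))" .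
qed auto

end

context A4
begin

interpretation prob_space M by (rule P)
interpretation nu: prob_space \<nu> by (rule prob_nu)

lemma one_coord:
  fixes W t :: "real^'p \<Rightarrow> real"
  assumes W[measurable]: "W \<in> borel_measurable borel" and W0: "\<And>u. W u \<ge> 0"
    and t[measurable]: "t \<in> borel_measurable borel"
  shows "(\<integral>\<^sup>+ y. ennreal (W (fst y) * exp (t (fst y) * ((if V y < v then 1 else 0) - Fc (fst y) v))) \<partial>\<nu>)
       \<le> (\<integral>\<^sup>+ y. ennreal (W (fst y) * exp ((t (fst y))\<^sup>2 / 8)) \<partial>\<nu>)"
proof -
  define a1 where "a1 = (\<lambda>u. ennreal (W u * exp (t u * (1 - Fc u v))))"
  define a0 where "a0 = (\<lambda>u. ennreal (W u * exp (- t u * Fc u v)))"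
  have [measurable]: "a1 \<in> borel_measurable borel" "a0 \<in> borel_measurable borel"
    unfolding a1_def a0_def by measurable
  have Dl[measurable]: "{y \<in> space \<nu>. V y < v} \<in> sets \<nu>" by measurable
  have Dg[measurable]: "{y \<in> space \<nu>. \<not> V y < v} \<in> sets \<nu>" by measurable
  have "(\<integral>\<^sup>+ y. ennreal (W (fst y) * exp (t (fst y) * ((if V y < v then 1 else 0) - Fc (fst y) v))) \<partial>\<nu>)
      = (\<integral>\<^sup>+ y. a1 (fst y) * indicator {y \<in> space \<nu>. V y < v} y + a0 (fst y) * indicator {y \<in> space \<nu>. \<not> V y < v} y \<partial>\<nu>)"
    by (intro nn_integral_cong) (auto simp: a1_def a0_def indicator_def)
  also have "\<dots> = (\<integral>\<^sup>+ y. a1 (fst y) * indicator {y \<in> space \<nu>. V y < v} y \<partial>\<nu>)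
      + (\<integral>\<^sup>+ y. a0 (fst y) * indicator {y \<in> space \<nu>. \<not> V y < v} y \<partial>\<nu>)"
    by (rule nn_integral_add) measurable
  also have "\<dots> = (\<integral>\<^sup>+ y. ennreal (Fc (fst y) v) * a1 (fst y) \<partial>\<nu>)
      + (\<integral>\<^sup>+ y. ennreal (1 - Fc (fst y) v) * a0 (fst y) \<partial>\<nu>)"
    by (simp add: int_lt int_ge)
  also have "\<dots> = (\<integral>\<^sup>+ y. ennreal (Fc (fst y) v) * a1 (fst y) + ennreal (1 - Fc (fst y) v) * a0 (fst y) \<partial>\<nu>)"
    by (rule nn_integral_add[symmetric]) measurable
  also have "\<dots> \<le> (\<integral>\<^sup>+ y. ennreal (W (fst y) * exp ((t (fst y))\<^sup>2 / 8)) \<partial>\<nu>)"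
  proof (intro nn_integral_mono)
    fix y :: "(real^'p) \<times> 'y"
    define u where "u = fst y"
    define p where "p = Fc u v"
    have p01: "0 \<le> p" "p \<le> 1" using Fc_bounds by (auto simp: p_def)
    have e1: "ennreal p * a1 u = ennreal (p * (W u * exp (t u * (1 - p))))"
      unfolding a1_def p_def[symmetric] using p01 W0[of u] by (intro ennreal_mult[symmetric]) auto
    have e0: "ennreal (1 - p) * a0 u = ennreal ((1 - p) * (W u * exp (- t u * p)))"
      unfolding a0_def p_def[symmetric] using p01 W0[of u] by (intro ennreal_mult[symmetric]) auto
    have "ennreal p * a1 u + ennreal (1 - p) * a0 u
        = ennreal (p * (W u * exp (t u * (1 - p))) + (1 - p) * (W u * exp (- t u * p)))"
      unfolding e1 e0 using p01 W0[of u] by (intro ennreal_plus[symmetric]) auto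
    also have "p * (W u * exp (t u * (1 - p))) + (1 - p) * (W u * exp (- t u * p))
        = W u * (p * exp (t u * (1 - p)) + (1 - p) * exp (- t u * p))" by (simp add: algebra_simps)
    also have "\<dots> \<le> ennreal (W u * exp ((t u)\<^sup>2 / 8))"
      by (intro ennreal_leI mult_left_mono hoeff_pt p01 W0)
    finally show "ennreal (Fc (fst y) v) * a1 (fst y) + ennreal (1 - Fc (fst y) v) * a0 (fst y)
        \<le> ennreal (W (fst y) * exp ((t (fst y))\<^sup>2 / 8))" by (simp add: p_def u_def)
  qed
  finally show ?thesis .
qed

end

locale A4core = A4 M X Y MY V d F pX L \<beta> h
  for M :: "'a measure"
    and X :: "nat \<Rightarrow> 'a \<Rightarrow> real^'p"
    and Y :: "nat \<Rightarrow> 'a \<Rightarrow> 'y"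
    and MY :: "'y measure"
    and V :: "(real^'p) \<times> 'y \<Rightarrow> real"
    and d :: "real^'p \<Rightarrow> real^'p \<Rightarrow> real"
    and F :: "real^'p \<Rightarrow> real \<Rightarrow> real"
    and pX :: "real^'p \<Rightarrow> real"
    and L \<beta> :: real
    and h :: "nat \<Rightarrow> real" +
  fixes n i :: nat and hh :: real and S :: "((nat \<Rightarrow> real^'p) \<times> real) set" and sg :: real
  assumes n2: "n \<ge> 2" and iI: "i \<in> {1..n+1}" and hh: "hh > 0"
    and S: "S \<in> sets (PiM {1..n+1} (\<lambda>_. borel) \<Otimes>\<^sub>M borel)" and sg: "sg = 1 \<or> sg = -1"
begin

definition "I = {1..n+1}"
definition "J = {1..n} - {i}"
definition "Hx xs k = kernH d hh (xs i) (xs k)"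
definition "Bx xs = (\<Sum>k\<in>I. Hx xs k)"
definition "ax xs k = Hx xs k / Bx xs"
definition "sx xs = sqrt (ln (real n) / Bx xs)"
definition "s2 xs = (\<Sum>k\<in>J. (ax xs k)\<^sup>2)"
definition "lam xs = 4 * sx xs / s2 xs"
definition "gS xs v = (indicator S (restrict xs I, v) :: real)"
definition "Rest K j xs bs v = gS xs v * exp (- lam xs * sx xs)
   * (\<Prod>k\<in>J-K-{j}. exp (sg * lam xs * ax xs k * (bs k - Fc (xs k) v)))
   * (\<Prod>k\<in>K. exp ((sg * lam xs * ax xs k)\<^sup>2 / 8))"
definition "Fk K xs bs v = gS xs v * exp (- lam xs * sx xs)
   * (\<Prod>k\<in>J-K. exp (sg * lam xs * ax xs k * (bs k - Fc (xs k) v)))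
   * (\<Prod>k\<in>K. exp ((sg * lam xs * ax xs k)\<^sup>2 / 8))"
definition "xz z = (\<lambda>k. if k \<in> I then fst (z k) else 0)"
definition "bz z = (\<lambda>k. if k \<in> I then (if V (z k) < V (z i) then 1 else 0) else (0::real))"
definition "vz z = V (z i)"
definition "fK K z = Fk K (xz z) (bz z) (vz z)"
definition "PP = PiM I (\<lambda>_. \<nu>)"

lemma iI': "i \<in> I" using iI by (simp add: I_def)
lemma finI: "finite I" by (simp add: I_def)
lemma JI: "J \<subseteq> I" by (auto simp: J_def I_def)
lemma S_meas [measurable]: "S \<in> sets (PiM I (\<lambda>_. borel) \<Otimes>\<^sub>M borel)" using S by (simp add: I_def)

lemma Fk_meas [measurable (raw)]:
  assumes [measurable]: "f \<in> N \<rightarrow>\<^sub>M PiM UNIV (\<lambda>_. borel)" "g \<in> N \<rightarrow>\<^sub>M PiM UNIV (\<lambda>_. borel)" "w \<in> N \<rightarrow>\<^sub>M borel"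
  shows "(\<lambda>x. Fk K (f x) (g x) (w x)) \<in> borel_measurable N"
  unfolding Fk_def gS_def lam_def sx_def s2_def ax_def Bx_def Hx_def kernH_def by measurable

lemma Rest_meas [measurable (raw)]:
  assumes [measurable]: "f \<in> N \<rightarrow>\<^sub>M PiM UNIV (\<lambda>_. borel)" "g \<in> N \<rightarrow>\<^sub>M PiM UNIV (\<lambda>_. borel)" "w \<in> N \<rightarrow>\<^sub>M borel"
  shows "(\<lambda>x. Rest K j (f x) (g x) (w x)) \<in> borel_measurable N"
  unfolding Rest_def gS_def lam_def sx_def s2_def ax_def Bx_def Hx_def kernH_def by measurable

lemma tt_meas [measurable (raw)]:
  assumes [measurable]: "f \<in> N \<rightarrow>\<^sub>M PiM UNIV (\<lambda>_. borel)"
  shows "(\<lambda>x. sg * lam (f x) * ax (f x) j) \<in> borel_measurable N"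
  unfolding lam_def sx_def s2_def ax_def Bx_def Hx_def kernH_def by measurable

lemma comp_meas [measurable (raw)]:
  "k \<in> I \<Longrightarrow> (\<lambda>\<omega>. \<omega> k) \<in> PiM I (\<lambda>_. \<nu>) \<rightarrow>\<^sub>M (borel \<Otimes>\<^sub>M MY)"
  using measurable_component_singleton[of k I "\<lambda>_. \<nu>"] by (simp add: measurable_cong_sets[OF refl sets_nu])

lemma xz_meas [measurable]: "xz \<in> PP \<rightarrow>\<^sub>M PiM UNIV (\<lambda>_. borel)"
  unfolding xz_def PP_def
proof (rule measurable_PiM_single')
  fix k :: nat
  show "(\<lambda>\<omega>. if k \<in> I then fst (\<omega> k) else 0) \<in> borel_measurable (Pi\<^sub>M I (\<lambda>_. \<nu>))"
    by (cases "k \<in> I") auto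
qed auto

lemma bz_meas [measurable]: "bz \<in> PP \<rightarrow>\<^sub>M PiM UNIV (\<lambda>_. borel)"
  unfolding bz_def PP_def
proof (rule measurable_PiM_single')
  fix k :: nat
  note iI'[simp]
  show "(\<lambda>\<omega>. if k \<in> I then if V (\<omega> k) < V (\<omega> i) then 1 else 0 else (0::real)) \<in> borel_measurable (Pi\<^sub>M I (\<lambda>_. \<nu>))"
    by (cases "k \<in> I") auto
qed auto

lemma vz_meas [measurable]: "vz \<in> borel_measurable PP"
  unfolding vz_def PP_def using iI' by (simp add: measurable_cong_sets[OF sets_nu refl])

lemma fK_meas [measurable]: "fK K \<in> borel_measurable PP"
  unfolding fK_def by measurable

lemma upd_meas [measurable]: "(\<lambda>u. xs0(j := u)) \<in> borel \<rightarrow>\<^sub>M PiM UNIV (\<lambda>_. borel)"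
  by (rule measurable_PiM_single') auto

lemma finJ: "finite J" by (simp add: J_def)

lemma Fk_split:
  assumes "j \<in> J" "j \<notin> K"
  shows "Fk K xs bs v = Rest K j xs bs v * exp (sg * lam xs * ax xs j * (bs j - Fc (xs j) v))"
proof -
  have "J - K = insert j (J - K - {j})" using assms by auto
  hence "(\<Prod>k\<in>J-K. exp (sg * lam xs * ax xs k * (bs k - Fc (xs k) v)))
      = exp (sg * lam xs * ax xs j * (bs j - Fc (xs j) v)) * (\<Prod>k\<in>J-K-{j}. exp (sg * lam xs * ax xs k * (bs k - Fc (xs k) v)))"
    using finJ by (metis (no_types, lifting) Diff_iff finite_Diff insertI1 prod.remove)
  thus ?thesis unfolding Fk_def Rest_def by (simp add: algebra_simps)
qed

lemma Fk_split2:
  assumes "j \<in> J" "j \<notin> K" "K \<subseteq> J"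
  shows "Fk (insert j K) xs bs v = Rest K j xs bs v * exp ((sg * lam xs * ax xs j)\<^sup>2 / 8)"
proof -
  have fK: "finite K" using assms(3) finJ finite_subset by blast
  have "J - insert j K = J - K - {j}" by auto
  moreover have "(\<Prod>k\<in>insert j K. exp ((sg * lam xs * ax xs k)\<^sup>2 / 8))
      = exp ((sg * lam xs * ax xs j)\<^sup>2 / 8) * (\<Prod>k\<in>K. exp ((sg * lam xs * ax xs k)\<^sup>2 / 8))"
    using fK assms(2) by simp
  ultimately show ?thesis unfolding Fk_def Rest_def by (simp add: algebra_simps)
qed

lemma Rest_upd: "Rest K j xs (bs(j := b)) v = Rest K j xs bs v"
  unfolding Rest_def by (intro arg_cong2[where f="(*)"] refl prod.cong) auto

lemma Rest_nonneg: "Rest K j xs bs v \<ge> 0"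
  unfolding Rest_def gS_def by (intro mult_nonneg_nonneg prod_nonneg) auto

lemma step:
  assumes K: "K \<subseteq> J" and j: "j \<in> J" "j \<notin> K"
  shows "(\<integral>\<^sup>+ z. ennreal (fK K z) \<partial>PP) \<le> (\<integral>\<^sup>+ z. ennreal (fK (insert j K) z) \<partial>PP)"
proof -
  have psf: "product_sigma_finite (\<lambda>_::nat. \<nu>)" using prod_nu unfolding product_prob_space_def by blast
  have jI: "j \<in> I" "j \<noteq> i" using j JI by (auto simp: J_def)
  have Ieq: "insert j (I - {j}) = I" using jI by auto
  have fin: "finite (I - {j})" "j \<notin> I - {j}" using finI by auto
  have split: "(\<integral>\<^sup>+ z. f z \<partial>PP) = (\<integral>\<^sup>+ x. (\<integral>\<^sup>+ y. f (x(j := y)) \<partial>\<nu>) \<partial>PiM (I - {j}) (\<lambda>_. \<nu>))"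
    if "f \<in> borel_measurable PP" for f
    using product_sigma_finite.product_nn_integral_insert[OF psf fin, of f] that Ieq by (simp add: PP_def)
  have inner: "(\<integral>\<^sup>+ y. ennreal (fK K (x(j := y))) \<partial>\<nu>) \<le> (\<integral>\<^sup>+ y. ennreal (fK (insert j K) (x(j := y))) \<partial>\<nu>)" for x
  proof -
    define v0 where "v0 = V (x i)"
    define xs0 where "xs0 = xz x"
    define bs0 where "bs0 = bz x"
    define W where "W u = Rest K j (xs0(j := u)) bs0 v0" for u
    define tt where "tt u = sg * lam (xs0(j := u)) * ax (xs0(j := u)) j" for u
    have xzu: "xz (x(j := y)) = xs0(j := fst y)" for y using jI by (auto simp: xz_def xs0_def)
    have bzu: "bz (x(j := y)) = bs0(j := (if V y < v0 then 1 else 0))" for y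
      using jI by (auto simp: bz_def bs0_def v0_def)
    have vzu: "vz (x(j := y)) = v0" for y using jI by (simp add: vz_def v0_def)
    have e1: "fK K (x(j := y)) = W (fst y) * exp (tt (fst y) * ((if V y < v0 then 1 else 0) - Fc (fst y) v0))" for y
      unfolding fK_def xzu bzu vzu W_def tt_def using j by (simp add: Fk_split Rest_upd algebra_simps)
    have e2: "fK (insert j K) (x(j := y)) = W (fst y) * exp ((tt (fst y))\<^sup>2 / 8)" for y
      unfolding fK_def xzu bzu vzu W_def tt_def using j K by (simp add: Fk_split2 Rest_upd)
    have W0: "W u \<ge> 0" for u unfolding W_def by (rule Rest_nonneg)
    have bs0s: "bs0 \<in> space (Pi\<^sub>M UNIV (\<lambda>_. borel :: real measure))" by (simp add: space_PiM PiE_def extensional_def)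
    have Wm: "W \<in> borel_measurable borel" unfolding W_def
      by (rule Rest_meas) (auto intro: measurable_const[OF bs0s])
    have tm: "tt \<in> borel_measurable borel" unfolding tt_def by measurable
    show ?thesis unfolding e1 e2 using one_coord[OF Wm W0 tm, of v0] by simp
  qed
  have "(\<integral>\<^sup>+ z. ennreal (fK K z) \<partial>PP) = (\<integral>\<^sup>+ x. (\<integral>\<^sup>+ y. ennreal (fK K (x(j := y))) \<partial>\<nu>) \<partial>PiM (I - {j}) (\<lambda>_. \<nu>))"
    by (rule split) measurable
  also have "\<dots> \<le> (\<integral>\<^sup>+ x. (\<integral>\<^sup>+ y. ennreal (fK (insert j K) (x(j := y))) \<partial>\<nu>) \<partial>PiM (I - {j}) (\<lambda>_. \<nu>))"
    by (intro nn_integral_mono inner)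
  also have "\<dots> = (\<integral>\<^sup>+ z. ennreal (fK (insert j K) z) \<partial>PP)"
    by (rule split[symmetric]) measurable
  finally show ?thesis .
qed

lemma iterate:
  assumes "K \<subseteq> J"
  shows "(\<integral>\<^sup>+ z. ennreal (fK {} z) \<partial>PP) \<le> (\<integral>\<^sup>+ z. ennreal (fK K z) \<partial>PP)"
proof -
  have "finite K" using assms finJ finite_subset by blast
  thus ?thesis using assms
  proof (induction K rule: finite_induct)
    case empty thus ?case by simp
  next
    case (insert x F)
    hence "(\<integral>\<^sup>+ z. ennreal (fK {} z) \<partial>PP) \<le> (\<integral>\<^sup>+ z. ennreal (fK F z) \<partial>PP)" by simp
    also have "\<dots> \<le> (\<integral>\<^sup>+ z. ennreal (fK (insert x F) z) \<partial>PP)"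
      using insert by (intro step) auto
    finally show ?case .
  qed
qed

definition "Rz z = (1 / Bx (xz z)) * (\<Sum>j\<in>J. Hx (xz z) j * (bz z j - Fc (xz z j) (vz z)))"

lemma Rz_meas [measurable]: "Rz \<in> borel_measurable PP"
  unfolding Rz_def Bx_def Hx_def kernH_def by measurable

lemma sxz_meas [measurable]: "(\<lambda>z. sx (xz z)) \<in> borel_measurable PP"
  unfolding sx_def Bx_def Hx_def kernH_def by measurable

lemma Hx_pos: "Hx xs k > 0" by (simp add: Hx_def kernH_def)

lemma Bx_pos: "Bx xs > 0"
  unfolding Bx_def using finI iI' by (intro sum_pos) (auto intro: Hx_pos)

lemma sx_nonneg: "sx xs \<ge> 0"
  unfolding sx_def using Bx_pos[of xs] n2 by simp

lemma s2_nonneg: "s2 xs \<ge> 0" unfolding s2_def by (simp add: sum_nonneg)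

lemma lam_nonneg: "lam xs \<ge> 0" unfolding lam_def using sx_nonneg[of xs] s2_nonneg[of xs] by simp

lemma fK_empty:
  "fK {} z = gS (xz z) (vz z) * exp (lam (xz z) * (sg * Rz z - sx (xz z)))"
proof -
  have "(\<Prod>k\<in>J. exp (sg * lam (xz z) * ax (xz z) k * (bz z k - Fc (xz z k) (vz z))))
      = exp (\<Sum>k\<in>J. sg * lam (xz z) * ax (xz z) k * (bz z k - Fc (xz z k) (vz z)))"
    by (simp add: exp_sum[OF finJ])
  also have "(\<Sum>k\<in>J. sg * lam (xz z) * ax (xz z) k * (bz z k - Fc (xz z k) (vz z))) = sg * lam (xz z) * Rz z"
    unfolding Rz_def ax_def sum_distrib_left using Bx_pos[of "xz z"] by (intro sum.cong refl) (simp add: field_simps)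
  finally show ?thesis unfolding fK_def Fk_def
    by (simp add: exp_add[symmetric] algebra_simps)
qed

lemma step1:
  "emeasure PP {z \<in> space PP. (restrict (xz z) I, vz z) \<in> S \<and> sg * Rz z \<ge> sx (xz z)}
     \<le> (\<integral>\<^sup>+ z. ennreal (fK {} z) \<partial>PP)"
proof -
  have m1: "{z \<in> space PP. sx (xz z) \<le> sg * Rz z} \<in> sets PP"
    by (rule borel_measurable_le[of "\<lambda>z. sx (xz z)" _ "\<lambda>z. sg * Rz z"]) measurable
  have m2: "{z \<in> space PP. (restrict (xz z) I, vz z) \<in> S} \<in> sets PP" by measurable
  have "{z \<in> space PP. (restrict (xz z) I, vz z) \<in> S \<and> sg * Rz z \<ge> sx (xz z)}
     = {z \<in> space PP. (restrict (xz z) I, vz z) \<in> S} \<inter> {z \<in> space PP. sx (xz z) \<le> sg * Rz z}" by auto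
  hence m: "{z \<in> space PP. (restrict (xz z) I, vz z) \<in> S \<and> sg * Rz z \<ge> sx (xz z)} \<in> sets PP"
    using m1 m2 by simp
  have "emeasure PP {z \<in> space PP. (restrict (xz z) I, vz z) \<in> S \<and> sg * Rz z \<ge> sx (xz z)}
      = (\<integral>\<^sup>+ z. indicator {z \<in> space PP. (restrict (xz z) I, vz z) \<in> S \<and> sg * Rz z \<ge> sx (xz z)} z \<partial>PP)"
    using m by simp
  also have "\<dots> \<le> (\<integral>\<^sup>+ z. ennreal (fK {} z) \<partial>PP)"
  proof (intro nn_integral_mono)
    fix z
    show "indicator {z \<in> space PP. (restrict (xz z) I, vz z) \<in> S \<and> sg * Rz z \<ge> sx (xz z)} z \<le> ennreal (fK {} z)"
    proof (cases "z \<in> space PP \<and> (restrict (xz z) I, vz z) \<in> S \<and> sg * Rz z \<ge> sx (xz z)")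
      case True
      hence "lam (xz z) * (sg * Rz z - sx (xz z)) \<ge> 0" using lam_nonneg by simp
      hence "1 \<le> fK {} z" using True unfolding fK_empty gS_def by simp
      thus ?thesis using True by simp
    next
      case False
      hence "z \<notin> {z \<in> space PP. (restrict (xz z) I, vz z) \<in> S \<and> sg * Rz z \<ge> sx (xz z)}" by blast
      thus ?thesis by simp
    qed
  qed
  finally show ?thesis .
qed

lemma fK_J:
  "fK J z = gS (xz z) (vz z) * exp (- lam (xz z) * sx (xz z) + (lam (xz z))\<^sup>2 * s2 (xz z) / 8)"
proof -
  have sg2: "sg\<^sup>2 = 1" using sg by auto
  have "(\<Prod>k\<in>J. exp ((sg * lam (xz z) * ax (xz z) k)\<^sup>2 / 8)) = exp (\<Sum>k\<in>J. (sg * lam (xz z) * ax (xz z) k)\<^sup>2 / 8)"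
    by (simp add: exp_sum[OF finJ])
  also have "(\<Sum>k\<in>J. (sg * lam (xz z) * ax (xz z) k)\<^sup>2 / 8) = (lam (xz z))\<^sup>2 * s2 (xz z) / 8"
    unfolding s2_def using sg2 by (simp add: power_mult_distrib sum_distrib_left sum_divide_distrib[symmetric] algebra_simps)
  finally show ?thesis unfolding fK_def Fk_def by (simp add: exp_add[symmetric] algebra_simps)
qed

lemma J_ne: "J \<noteq> {}"
proof (cases "i = 1")
  case True
  hence "2 \<in> J" unfolding J_def using n2 by simp
  thus ?thesis by blast
next
  case False
  hence "1 \<in> J" unfolding J_def using n2 by simp
  thus ?thesis by blast
qed

lemma bound_pt:
  assumes cube: "\<And>k. k \<in> I \<Longrightarrow> xs k \<in> unit_cube"
  shows "exp (- lam xs * sx xs + (lam xs)\<^sup>2 * s2 xs / 8) \<le> 1 / (real n)\<^sup>2"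
proof -
  define B where "B = Bx xs"
  define s where "s = sx xs"
  define q where "q = s2 xs"
  have B0: "B > 0" using Bx_pos by (simp add: B_def)
  have ln0: "ln (real n) \<ge> 0" using n2 by simp
  have H1: "Hx xs k \<le> 1" if "k \<in> I" for k
  proof -
    have "d (xs i) (xs k) \<ge> 0" using d_nonneg cube iI' that by blast
    thus ?thesis using hh unfolding Hx_def kernH_def by simp
  qed
  have q0: "q > 0"
  proof -
    obtain k where k: "k \<in> J" using J_ne by blast
    have "(ax xs k)\<^sup>2 > 0" using Hx_pos[of xs k] Bx_pos[of xs] by (simp add: ax_def)
    moreover have "(ax xs k)\<^sup>2 \<le> q" unfolding q_def s2_def
      by (rule member_le_sum) (use k finJ in auto)
    ultimately show ?thesis by linarith
  qed
  have qB: "q \<le> 1 / B"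
  proof -
    have "q = (\<Sum>k\<in>J. (Hx xs k)\<^sup>2) / B\<^sup>2"
      unfolding q_def s2_def ax_def B_def by (simp add: power_divide sum_divide_distrib)
    also have "(\<Sum>k\<in>J. (Hx xs k)\<^sup>2) \<le> (\<Sum>k\<in>J. Hx xs k)"
    proof (rule sum_mono)
      fix k assume "k \<in> J"
      hence "Hx xs k \<le> 1" using H1 JI by auto
      moreover have "Hx xs k \<ge> 0" using Hx_pos[of xs k] by simp
      ultimately show "(Hx xs k)\<^sup>2 \<le> Hx xs k" using mult_left_le[of "Hx xs k" "Hx xs k"] by (simp add: power2_eq_square)
    qed
    also have "(\<Sum>k\<in>J. Hx xs k) \<le> B"
      unfolding B_def Bx_def using JI finI by (intro sum_mono2) (auto intro: less_imp_le Hx_pos)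
    finally have "q \<le> B / B\<^sup>2" using B0 by (simp add: divide_right_mono)
    thus ?thesis using B0 by (simp add: power2_eq_square)
  qed
  have s2eq: "s\<^sup>2 = ln (real n) / B" unfolding s_def sx_def B_def using ln0 Bx_pos[of xs] by simp
  have "- lam xs * sx xs + (lam xs)\<^sup>2 * s2 xs / 8 = - 2 * s\<^sup>2 / q"
    unfolding lam_def s_def[symmetric] q_def[symmetric] using q0 by (simp add: field_simps power2_eq_square)
  also have "\<dots> \<le> - 2 * ln (real n)"
  proof -
    have "ln (real n) * q \<le> ln (real n) * (1 / B)" using qB ln0 by (intro mult_left_mono)
    hence "ln (real n) * q \<le> s\<^sup>2" using s2eq by simp
    hence "ln (real n) \<le> s\<^sup>2 / q" using q0 by (simp add: field_simps)
    thus ?thesis using q0 by (simp add: field_simps)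
  qed
  finally have "exp (- lam xs * sx xs + (lam xs)\<^sup>2 * s2 xs / 8) \<le> exp (- 2 * ln (real n))" by simp
  also have "exp (- 2 * ln (real n)) = 1 / (real n)\<^sup>2"
  proof -
    have "exp (- 2 * ln (real n)) = inverse (exp (ln (real n)) ^ 2)"
      by (simp add: exp_minus exp_of_nat_mult[symmetric] mult.commute)
    thus ?thesis using n2 by (simp add: divide_inverse)
  qed
  finally show ?thesis .
qed

lemma AE_cube_PP: "AE z in PP. \<forall>k\<in>I. xz z k \<in> unit_cube"
proof -
  have fin: "finite I" "I \<noteq> {}" "I \<subseteq> {1..}" using iI' by (auto simp: I_def)
  have PPd: "PP = distr M PP (\<lambda>\<omega>. \<lambda>j\<in>I. (X j \<omega>, Y j \<omega>))"
    unfolding PP_def using distr_PiM[OF fin] by simp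
  have m: "{z \<in> space PP. \<forall>k\<in>I. xz z k \<in> unit_cube} \<in> sets PP"
    using finI by measurable
  have "AE \<omega> in M. \<forall>k\<in>I. X k \<omega> \<in> unit_cube"
    by (rule AE_finite_allI[OF finI]) (auto intro: AE_cube simp: I_def)
  hence "AE \<omega> in M. \<forall>k\<in>I. xz (\<lambda>j\<in>I. (X j \<omega>, Y j \<omega>)) k \<in> unit_cube"
    by (rule AE_mp) (auto simp: xz_def)
  hence ae: "AE z in distr M PP (\<lambda>\<omega>. \<lambda>j\<in>I. (X j \<omega>, Y j \<omega>)). \<forall>k\<in>I. xz z k \<in> unit_cube"
    by (subst AE_distr_iff) (auto simp: PP_def m[unfolded PP_def])
  show ?thesis by (subst PPd) (rule ae)
qed

lemma step3:
  "(\<integral>\<^sup>+ z. ennreal (fK J z) \<partial>PP)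
     \<le> ennreal (1 / (real n)\<^sup>2) * emeasure PP {z \<in> space PP. (restrict (xz z) I, vz z) \<in> S}"
proof -
  have mG: "{z \<in> space PP. (restrict (xz z) I, vz z) \<in> S} \<in> sets PP" by measurable
  have "(\<integral>\<^sup>+ z. ennreal (fK J z) \<partial>PP)
      \<le> (\<integral>\<^sup>+ z. ennreal (1 / (real n)\<^sup>2) * indicator {z \<in> space PP. (restrict (xz z) I, vz z) \<in> S} z \<partial>PP)"
  proof (rule nn_integral_mono_AE)
    show "AE z in PP. ennreal (fK J z) \<le> ennreal (1 / (real n)\<^sup>2) * indicator {z \<in> space PP. (restrict (xz z) I, vz z) \<in> S} z"
    proof (rule AE_mp[OF AE_cube_PP], rule AE_I2, rule impI)
      fix z assume z: "z \<in> space PP" and c: "\<forall>k\<in>I. xz z k \<in> unit_cube"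
      have b: "exp (- lam (xz z) * sx (xz z) + (lam (xz z))\<^sup>2 * s2 (xz z) / 8) \<le> 1 / (real n)\<^sup>2"
        by (rule bound_pt) (use c in auto)
      show "ennreal (fK J z) \<le> ennreal (1 / (real n)\<^sup>2) * indicator {z \<in> space PP. (restrict (xz z) I, vz z) \<in> S} z"
      proof (cases "(restrict (xz z) I, vz z) \<in> S")
        case True
        hence "fK J z \<le> 1 / (real n)\<^sup>2" unfolding fK_J gS_def using b by simp
        thus ?thesis using True z by (simp add: ennreal_leI)
      next
        case False
        thus ?thesis unfolding fK_J gS_def by simp
      qed
    qed
  qed
  also have "\<dots> = ennreal (1 / (real n)\<^sup>2) * emeasure PP {z \<in> space PP. (restrict (xz z) I, vz z) \<in> S}"
    using mG by (rule nn_integral_cmult_indicator)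
  finally show ?thesis .
qed

lemma core_sign:
  "emeasure PP {z \<in> space PP. (restrict (xz z) I, vz z) \<in> S \<and> sg * Rz z \<ge> sx (xz z)}
     \<le> ennreal (1 / (real n)\<^sup>2) * emeasure PP {z \<in> space PP. (restrict (xz z) I, vz z) \<in> S}"
  using step1 iterate[OF order_refl] step3 by (meson order_trans)

end

lemma CE_bound:
  fixes M G :: "'a measure" and A :: "'a set" and c :: real
  assumes P: "prob_space M" and sub: "subalgebra M G" and c: "c \<ge> 0" and Asp: "A \<subseteq> space M"
    and bound: "A \<in> sets M \<Longrightarrow> (\<And>B. B \<in> sets G \<Longrightarrow> measure M (A \<inter> B) \<le> c * measure M B)"
  shows "AE \<omega> in M. real_cond_exp M G (indicator A) \<omega> \<le> c"
proof (cases "A \<in> sets M")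
  case False
  have nm: "(\<lambda>x. ennreal (indicator A x :: real)) \<notin> borel_measurable M"
  proof
    assume "(\<lambda>x. ennreal (indicator A x :: real)) \<in> borel_measurable M"
    hence "(\<lambda>x. enn2real (ennreal (indicator A x :: real))) \<in> borel_measurable M" by measurable
    hence "(indicator A :: 'a \<Rightarrow> real) \<in> borel_measurable M" by simp
    hence "A \<inter> space M \<in> sets M" by (simp add: borel_measurable_indicator_iff)
    with Asp False show False by (simp add: Int_absorb2)
  qed
  have "real_cond_exp M G (indicator A) \<omega> \<le> 0" for \<omega>
    unfolding real_cond_exp_def nn_cond_exp_def using nm by simp
  thus ?thesis using c by (auto intro: order_trans)
next
  case True
  interpret prob_space M by (rule P)
  interpret finite_measure_subalgebra M G by unfold_locales (rule sub)
  define CE where "CE = real_cond_exp M G (indicator A)"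
  define E where "E = {x \<in> space M. c < CE x}"
  have intA: "integrable M (indicator A :: 'a \<Rightarrow> real)"
    using True by (intro integrable_real_indicator) (auto simp: emeasure_eq_measure)
  have spG: "space G = space M" and sG: "sets G \<subseteq> sets M" using sub by (auto simp: subalgebra_def)
  have EG: "E \<in> sets G"
  proof -
    have "{x \<in> space G. c < CE x} \<in> sets G" unfolding CE_def by measurable
    thus ?thesis using spG by (simp add: E_def)
  qed
  have EM: "E \<in> sets M" using EG sG by auto
  have iCE: "integrable M CE" unfolding CE_def by (rule real_cond_exp_int(1)[OF intA])
  have "(\<integral>x\<in>E. CE x \<partial>M) = (\<integral>x\<in>E. indicator A x \<partial>M)"
    unfolding CE_def by (rule real_cond_exp_intA[symmetric]) (auto intro: intA EG)
  also have "(\<integral>x\<in>E. indicator A x \<partial>M) = measure M (A \<inter> E)"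
  proof -
    have "(\<integral>x\<in>E. indicator A x \<partial>M) = (\<integral>x. indicator (A \<inter> E) x \<partial>M)"
      unfolding set_lebesgue_integral_def by (intro Bochner_Integration.integral_cong) (auto simp: indicator_def)
    also have "\<dots> = measure M (A \<inter> E)" using True EM by (simp add: Int_absorb2 sets.Int_space_eq2)
    finally show ?thesis .
  qed
  also have "\<dots> \<le> c * measure M E" by (rule bound[OF True EG])
  finally have le: "(\<integral>x\<in>E. CE x \<partial>M) \<le> c * measure M E" .
  have i1: "integrable M (\<lambda>x. indicator E x * CE x)" using integrable_mult_indicator[OF EM iCE] by simp
  have i2: "integrable M (\<lambda>x. indicator E x * c)"
  proof -
    have "integrable M (indicator E :: 'a \<Rightarrow> real)"
      using EM by (intro integrable_real_indicator) (auto simp: emeasure_eq_measure)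
    thus ?thesis by (rule integrable_mult_left)
  qed
  have "(\<integral>x. indicator E x * (CE x - c) \<partial>M) = (\<integral>x. indicator E x * CE x - indicator E x * c \<partial>M)"
    by (simp add: algebra_simps)
  also have "\<dots> = (\<integral>x. indicator E x * CE x \<partial>M) - (\<integral>x. indicator E x * c \<partial>M)"
    by (rule Bochner_Integration.integral_diff[OF i1 i2])
  also have "(\<integral>x. indicator E x * CE x \<partial>M) = (\<integral>x\<in>E. CE x \<partial>M)"
    by (simp add: set_lebesgue_integral_def)
  also have "(\<integral>x. indicator E x * c \<partial>M) = c * measure M E"
    using EM by simp
  finally have "(\<integral>x. indicator E x * (CE x - c) \<partial>M) \<le> 0" using le by simp
  moreover have nn: "\<And>x. 0 \<le> indicator E x * (CE x - c)" by (auto simp: indicator_def E_def)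
  moreover have "(\<integral>x. indicator E x * (CE x - c) \<partial>M) \<ge> 0"
    by (rule Bochner_Integration.integral_nonneg) (rule nn)
  ultimately have "(\<integral>x. indicator E x * (CE x - c) \<partial>M) = 0" by linarith
  moreover have i3: "integrable M (\<lambda>x. indicator E x * (CE x - c))"
    using Bochner_Integration.integrable_diff[OF i1 i2] by (simp add: algebra_simps)
  ultimately have "AE x in M. indicator E x * (CE x - c) = 0"
    using integral_nonneg_eq_0_iff_AE[OF i3] nn by simp
  thus ?thesis
  proof (rule AE_mp, intro AE_I2 impI)
    fix x assume x: "x \<in> space M" and z: "indicator E x * (CE x - c) = 0"
    show "real_cond_exp M G (indicator A) x \<le> c"
    proof (rule ccontr)
      assume "\<not> real_cond_exp M G (indicator A) x \<le> c"
      hence "x \<in> E" "CE x - c > 0" using x by (auto simp: E_def CE_def)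
      with z show False by simp
    qed
  qed
qed

context A4
begin

interpretation prob_space M by (rule P)

lemma core_total:
  assumes n2: "n \<ge> 2" and i: "i \<in> {1..n+1}" and S: "S \<in> sets (PiM {1..n+1} (\<lambda>_. borel) \<Otimes>\<^sub>M borel)"
    and Am: "{\<omega>' \<in> space M. \<bar>Rstat d (h n) F X (\<lambda>j \<omega>. V (X j \<omega>, Y j \<omega>)) n i \<omega>'\<bar>
                  \<ge> sqrt (ln (real n) / Bsum d (h n) X n (X i \<omega>') \<omega>')} \<in> sets M"
  shows "measure M ({\<omega>' \<in> space M. \<bar>Rstat d (h n) F X (\<lambda>j \<omega>. V (X j \<omega>, Y j \<omega>)) n i \<omega>'\<bar>
                  \<ge> sqrt (ln (real n) / Bsum d (h n) X n (X i \<omega>') \<omega>')}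
           \<inter> ((\<lambda>\<omega>. ((\<lambda>j\<in>{1..n+1}. X j \<omega>), V (X i \<omega>, Y i \<omega>))) -` S \<inter> space M))
       \<le> 2 / real n ^ 2 * measure M ((\<lambda>\<omega>. ((\<lambda>j\<in>{1..n+1}. X j \<omega>), V (X i \<omega>, Y i \<omega>))) -` S \<inter> space M)"
proof -
  interpret C1: A4core M X Y MY V d F pX L \<beta> h n i "h n" S 1
    by (rule A4core.intro[OF A4_axioms]) (unfold_locales; use n2 i S h_pos in auto)
  interpret C2: A4core M X Y MY V d F pX L \<beta> h n i "h n" S "-1"
    by (rule A4core.intro[OF A4_axioms]) (unfold_locales; use n2 i S h_pos in auto)
  have same: "C1.Rz = C2.Rz" "C1.PP = C2.PP" "C1.xz = C2.xz" "C1.vz = C2.vz" "C1.sx = C2.sx" "C1.I = C2.I" by (rule refl)+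
  define T where "T = (\<lambda>\<omega>. \<lambda>j\<in>C1.I. (X j \<omega>, Y j \<omega>))"
  define W where "W = (\<lambda>\<omega>. ((\<lambda>j\<in>{1..n+1}. X j \<omega>), V (X i \<omega>, Y i \<omega>)))"
  define A where "A = {\<omega>' \<in> space M. \<bar>Rstat d (h n) F X (\<lambda>j \<omega>. V (X j \<omega>, Y j \<omega>)) n i \<omega>'\<bar>
                  \<ge> sqrt (ln (real n) / Bsum d (h n) X n (X i \<omega>') \<omega>')}"
  define G' where "G' = {z \<in> space C1.PP. (restrict (C1.xz z) C1.I, C1.vz z) \<in> S}"
  define Q where "Q = {z \<in> space C1.PP. (restrict (C1.xz z) C1.I, C1.vz z) \<in> S \<and> \<bar>C1.Rz z\<bar> \<ge> C1.sx (C1.xz z)}"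
  define Q1 where "Q1 = {z \<in> space C1.PP. (restrict (C1.xz z) C1.I, C1.vz z) \<in> S \<and> 1 * C1.Rz z \<ge> C1.sx (C1.xz z)}"
  define Q2 where "Q2 = {z \<in> space C1.PP. (restrict (C1.xz z) C1.I, C1.vz z) \<in> S \<and> -1 * C1.Rz z \<ge> C1.sx (C1.xz z)}"
  have fin: "finite C1.I" "C1.I \<noteq> {}" "C1.I \<subseteq> {1..}" using C1.iI' by (auto simp: C1.I_def)
  have Tm: "T \<in> M \<rightarrow>\<^sub>M C1.PP" unfolding T_def C1.PP_def by (rule T_meas)
  have Td: "distr M C1.PP T = C1.PP" unfolding T_def C1.PP_def by (rule distr_PiM[OF fin])
  have G'm: "G' \<in> sets C1.PP" unfolding G'_def by measurable
  have sxm: "(\<lambda>z. C1.sx (C1.xz z)) \<in> borel_measurable C1.PP" by (rule C1.sxz_meas)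
  have Rzm: "C1.Rz \<in> borel_measurable C1.PP" by (rule C1.Rz_meas)
  have Qm: "Q \<in> sets C1.PP"
  proof -
    have "{z \<in> space C1.PP. C1.sx (C1.xz z) \<le> \<bar>C1.Rz z\<bar>} \<in> sets C1.PP"
      by (rule borel_measurable_le[of "\<lambda>z. C1.sx (C1.xz z)" _ "\<lambda>z. \<bar>C1.Rz z\<bar>"]) (use sxm Rzm in measurable)
    moreover have "Q = G' \<inter> {z \<in> space C1.PP. C1.sx (C1.xz z) \<le> \<bar>C1.Rz z\<bar>}" unfolding Q_def G'_def by auto
    ultimately show ?thesis using G'm by simp
  qed
  have Q1m: "Q1 \<in> sets C1.PP"
  proof -
    have "{z \<in> space C1.PP. C1.sx (C1.xz z) \<le> 1 * C1.Rz z} \<in> sets C1.PP"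
      by (rule borel_measurable_le[of "\<lambda>z. C1.sx (C1.xz z)" _ "\<lambda>z. 1 * C1.Rz z"]) (use sxm Rzm in measurable)
    moreover have "Q1 = G' \<inter> {z \<in> space C1.PP. C1.sx (C1.xz z) \<le> 1 * C1.Rz z}" unfolding Q1_def G'_def by auto
    ultimately show ?thesis using G'm by simp
  qed
  have Q2m: "Q2 \<in> sets C1.PP"
  proof -
    have "{z \<in> space C1.PP. C1.sx (C1.xz z) \<le> -1 * C1.Rz z} \<in> sets C1.PP"
      by (rule borel_measurable_le[of "\<lambda>z. C1.sx (C1.xz z)" _ "\<lambda>z. -1 * C1.Rz z"]) (use sxm Rzm in measurable)
    moreover have "Q2 = G' \<inter> {z \<in> space C1.PP. C1.sx (C1.xz z) \<le> -1 * C1.Rz z}" unfolding Q2_def G'_def by auto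
    ultimately show ?thesis using G'm by simp
  qed
  interpret PPp: prob_space C1.PP unfolding C1.PP_def by (rule prob_space_PiM) (rule prob_nu)
  have eQ: "emeasure C1.PP Q \<le> ennreal (2 / real n ^ 2) * emeasure C1.PP G'"
  proof -
    have "Q \<subseteq> Q1 \<union> Q2" unfolding Q_def Q1_def Q2_def by auto
    hence "emeasure C1.PP Q \<le> emeasure C1.PP (Q1 \<union> Q2)" by (intro emeasure_mono) (use Q1m Q2m in auto)
    also have "\<dots> \<le> emeasure C1.PP Q1 + emeasure C1.PP Q2" by (rule emeasure_subadditive[OF Q1m Q2m])
    also have "emeasure C1.PP Q1 \<le> ennreal (1 / (real n)\<^sup>2) * emeasure C1.PP G'"
      using C1.core_sign unfolding Q1_def G'_def by simp
    also have "emeasure C1.PP Q2 \<le> ennreal (1 / (real n)\<^sup>2) * emeasure C1.PP G'"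
      using C2.core_sign unfolding Q2_def G'_def by simp
    also have "ennreal (1 / (real n)\<^sup>2) * emeasure C1.PP G' + ennreal (1 / (real n)\<^sup>2) * emeasure C1.PP G'
        = ennreal (2 / real n ^ 2) * emeasure C1.PP G'"
      by (simp add: distrib_right[symmetric] ennreal_plus[symmetric] del: ennreal_plus)
    finally show ?thesis by (simp add: add_mono)
  qed
  hence mQ: "measure C1.PP Q \<le> 2 / real n ^ 2 * measure C1.PP G'"
    by (simp add: PPp.emeasure_eq_measure ennreal_mult[symmetric] del: ennreal_numeral)
  have WG: "W -` S \<inter> space M = T -` G' \<inter> space M"
  proof -
    have "restrict (C1.xz (T \<omega>)) C1.I = (\<lambda>j\<in>{1..n+1}. X j \<omega>)" for \<omega>
      by (auto simp: C1.xz_def T_def C1.I_def)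
    moreover have "C1.vz (T \<omega>) = V (X i \<omega>, Y i \<omega>)" for \<omega>
      using C1.iI' by (simp add: C1.vz_def T_def)
    ultimately show ?thesis using measurable_space[OF Tm] unfolding W_def G'_def by auto
  qed
  have AQ: "AE \<omega> in M. (\<omega> \<in> A \<inter> (W -` S \<inter> space M)) = (\<omega> \<in> T -` Q \<inter> space M)"
  proof -
    have "AE \<omega> in M. \<forall>k\<in>C1.I. X k \<omega> \<in> unit_cube"
    proof (rule AE_finite_allI[OF fin(1)])
      fix k assume "k \<in> C1.I" hence "k \<ge> 1" using fin(3) by auto
      thus "AE \<omega> in M. X k \<omega> \<in> unit_cube" by (rule AE_cube)
    qed
    thus ?thesis
    proof (rule AE_mp, intro AE_I2 impI)
      fix \<omega> assume \<omega>: "\<omega> \<in> space M" and cube: "\<forall>k\<in>C1.I. X k \<omega> \<in> unit_cube"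
      have xzT: "C1.xz (T \<omega>) k = X k \<omega>" if "k \<in> C1.I" for k using that by (simp add: C1.xz_def T_def)
      have vzT: "C1.vz (T \<omega>) = V (X i \<omega>, Y i \<omega>)" using C1.iI' by (simp add: C1.vz_def T_def)
      have bzT: "C1.bz (T \<omega>) k = (if V (X k \<omega>, Y k \<omega>) < V (X i \<omega>, Y i \<omega>) then 1 else 0)" if "k \<in> C1.I" for k
        using that C1.iI' by (simp add: C1.bz_def T_def)
      have BT: "C1.Bx (C1.xz (T \<omega>)) = Bsum d (h n) X n (X i \<omega>) \<omega>"
        unfolding C1.Bx_def Bsum_def C1.Hx_def using C1.iI'
        by (intro sum.cong) (auto simp: xzT C1.I_def)
      have RT: "C1.Rz (T \<omega>) = Rstat d (h n) F X (\<lambda>j \<omega>. V (X j \<omega>, Y j \<omega>)) n i \<omega>"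
      proof -
        have "C1.Hx (C1.xz (T \<omega>)) j * (C1.bz (T \<omega>) j - Fc (C1.xz (T \<omega>) j) (C1.vz (T \<omega>))) =
          kernH d (h n) (X i \<omega>) (X j \<omega>) * ((if V (X j \<omega>, Y j \<omega>) < V (X i \<omega>, Y i \<omega>) then 1 else 0) - F (X j \<omega>) (V (X i \<omega>, Y i \<omega>)))"
          if j: "j \<in> {1..n} - {i}" for j
        proof -
          have jI: "j \<in> C1.I" using j by (auto simp: C1.I_def)
          have "X j \<omega> \<in> unit_cube" using cube jI by auto
          thus ?thesis using jI C1.iI' by (simp add: C1.Hx_def xzT bzT vzT Fc_def)
        qed
        hence "(\<Sum>j\<in>C1.J. C1.Hx (C1.xz (T \<omega>)) j * (C1.bz (T \<omega>) j - Fc (C1.xz (T \<omega>) j) (C1.vz (T \<omega>))))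
          = (\<Sum>j\<in>{1..n} - {i}. kernH d (h n) (X i \<omega>) (X j \<omega>) * ((if V (X j \<omega>, Y j \<omega>) < V (X i \<omega>, Y i \<omega>) then 1 else 0) - F (X j \<omega>) (V (X i \<omega>, Y i \<omega>))))"
          unfolding C1.J_def by (rule sum.cong[OF refl])
        thus ?thesis unfolding C1.Rz_def Rstat_def BT by simp
      qed
      have sT: "C1.sx (C1.xz (T \<omega>)) = sqrt (ln (real n) / Bsum d (h n) X n (X i \<omega>) \<omega>)"
        unfolding C1.sx_def BT ..
      have "T \<omega> \<in> space C1.PP" using measurable_space[OF Tm \<omega>] .
      moreover have "\<omega> \<in> W -` S \<longleftrightarrow> T \<omega> \<in> G'" using WG \<omega> by blast
      ultimately show "(\<omega> \<in> A \<inter> (W -` S \<inter> space M)) = (\<omega> \<in> T -` Q \<inter> space M)"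
        using \<omega> unfolding A_def Q_def G'_def by (auto simp: RT sT)
    qed
  qed
  have Wm: "W -` S \<inter> space M \<in> sets M" unfolding WG using Tm G'm by measurable
  have A'm: "T -` Q \<inter> space M \<in> sets M" using Tm Qm by measurable
  have Am': "A \<in> sets M" using Am by (simp add: A_def)
  have "measure M (A \<inter> (W -` S \<inter> space M)) = measure M (T -` Q \<inter> space M)"
    unfolding measure_def using AQ Am' Wm A'm by (subst emeasure_eq_AE[OF AQ]) auto
  also have "\<dots> = measure C1.PP Q" using measure_distr[OF Tm Qm] Td by simp
  also have "\<dots> \<le> 2 / real n ^ 2 * measure C1.PP G'" by (rule mQ)
  also have "measure C1.PP G' = measure M (W -` S \<inter> space M)"
    using measure_distr[OF Tm G'm] Td WG by simp
  finally show ?thesis unfolding A_def W_def .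
qed

lemma part_c:
  assumes n: "n \<ge> 1" and i: "i \<in> {1..n+1}"
  shows "AE \<omega> in M.
          real_cond_exp M (cond_sigma M X (\<lambda>j \<omega>. V (X j \<omega>, Y j \<omega>)) n i)
            (indicator {\<omega>' \<in> space M.
                \<bar>Rstat d (h n) F X (\<lambda>j \<omega>. V (X j \<omega>, Y j \<omega>)) n i \<omega>'\<bar>
                  \<ge> sqrt (ln (real n) / Bsum d (h n) X n (X i \<omega>') \<omega>')}) \<omega>
          \<le> 2 / real n ^ 2"
proof -
  define W where "W = (\<lambda>\<omega>. ((\<lambda>j\<in>{1..n+1}. X j \<omega>), V (X i \<omega>, Y i \<omega>)))"
  define N where "N = (PiM {1..n+1} (\<lambda>_. borel :: (real^'p) measure) \<Otimes>\<^sub>M (borel :: real measure))"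
  define G where "G = cond_sigma M X (\<lambda>j \<omega>. V (X j \<omega>, Y j \<omega>)) n i"
  have Wm: "W \<in> M \<rightarrow>\<^sub>M N" unfolding W_def N_def by measurable
  have GW: "G = vimage_algebra (space M) W N" unfolding G_def cond_sigma_def W_def N_def by simp
  have Gs: "sets G = {W -` S \<inter> space M | S. S \<in> sets N}"
    unfolding GW by (rule sets_vimage_algebra2) (use measurable_space[OF Wm] in auto)
  have sub: "subalgebra M G"
    unfolding subalgebra_def using Gs measurable_sets[OF Wm] by (auto simp: GW)
  show ?thesis unfolding G_def[symmetric]
  proof (rule CE_bound[OF P sub])
    show "0 \<le> 2 / real n ^ 2" by simp
    fix B assume Am: "{\<omega>' \<in> space M. \<bar>Rstat d (h n) F X (\<lambda>j \<omega>. V (X j \<omega>, Y j \<omega>)) n i \<omega>'\<bar>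
                  \<ge> sqrt (ln (real n) / Bsum d (h n) X n (X i \<omega>') \<omega>')} \<in> sets M" and B: "B \<in> sets G"
    then obtain S where S: "S \<in> sets N" and BS: "B = W -` S \<inter> space M" using Gs by auto
    have Bm: "B \<in> sets M" using BS S Wm by (simp add: measurable_sets)
    show "measure M ({\<omega>' \<in> space M. \<bar>Rstat d (h n) F X (\<lambda>j \<omega>. V (X j \<omega>, Y j \<omega>)) n i \<omega>'\<bar>
                  \<ge> sqrt (ln (real n) / Bsum d (h n) X n (X i \<omega>') \<omega>')} \<inter> B) \<le> 2 / real n ^ 2 * measure M B"
    proof (cases "n = 1")
      case True
      have "measure M ({\<omega>' \<in> space M. \<bar>Rstat d (h n) F X (\<lambda>j \<omega>. V (X j \<omega>, Y j \<omega>)) n i \<omega>'\<bar>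
                  \<ge> sqrt (ln (real n) / Bsum d (h n) X n (X i \<omega>') \<omega>')} \<inter> B) \<le> measure M B"
        using Bm by (intro finite_measure_mono) auto
      also have "\<dots> \<le> 2 / real n ^ 2 * measure M B" using True by simp
      finally show ?thesis .
    next
      case False
      hence n2: "n \<ge> 2" using n by simp
      show ?thesis unfolding BS W_def
        by (rule core_total[OF n2 i _ Am]) (use S in \<open>simp add: N_def\<close>)
    qed
  qed auto
qed

end

theorem lemmaA4:
  fixes M :: "'a measure"
    and X :: "nat \<Rightarrow> 'a \<Rightarrow> real^'p"
    and Y :: "nat \<Rightarrow> 'a \<Rightarrow> 'y"
    and MY :: "'y measure"
    and V :: "(real^'p) \<times> 'y \<Rightarrow> real"
    and d :: "real^'p \<Rightarrow> real^'p \<Rightarrow> real"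
    and F :: "real^'p \<Rightarrow> real \<Rightarrow> real"
    and pX :: "real^'p \<Rightarrow> real"
    and L \<beta> :: real
    and h :: "nat \<Rightarrow> real"
  assumes P: "prob_space M"
    and meas_X: "\<And>i. X i \<in> borel_measurable M"
    and meas_Y: "\<And>i. Y i \<in> M \<rightarrow>\<^sub>M MY"
    and meas_V: "V \<in> borel_measurable (borel \<Otimes>\<^sub>M MY)"
    and indep: "prob_space.indep_vars M (\<lambda>_. borel \<Otimes>\<^sub>M MY) (\<lambda>i \<omega>. (X i \<omega>, Y i \<omega>)) {1..}"
    and ident: "\<And>i. i \<ge> 1 \<Longrightarrow>
        distr M (borel \<Otimes>\<^sub>M MY) (\<lambda>\<omega>. (X i \<omega>, Y i \<omega>)) = distr M (borel \<Otimes>\<^sub>M MY) (\<lambda>\<omega>. (X 1 \<omega>, Y 1 \<omega>))"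
    and dens: "distributed M lborel (X 1) (\<lambda>x. ennreal (pX x))"
    and support: "AE \<omega> in M. X 1 \<omega> \<in> unit_cube"
    and L_pos: "L > 0" and beta_nonneg: "\<beta> \<ge> 0"
    and dens_lb: "\<And>x. x \<in> unit_cube \<Longrightarrow> pX x \<ge> 1 / L"
    and meas_d: "case_prod d \<in> borel_measurable borel"
    and d_nonneg: "\<And>x x'. x \<in> unit_cube \<Longrightarrow> x' \<in> unit_cube \<Longrightarrow> d x x' \<ge> 0"
    and d_refl: "\<And>x. x \<in> unit_cube \<Longrightarrow> d x x = 0"
    and F_meas: "\<And>v. (\<lambda>x. F x v) \<in> borel_measurable borel"
    and F_cdf: "\<And>x. x \<in> unit_cube \<Longrightarrow>
        mono (F x) \<and> continuous_on UNIV (F x) \<and> (F x \<longlongrightarrow> 0) at_bot \<and> (F x \<longlongrightarrow> 1) at_top"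
    and F_cond: "\<And>A v. A \<in> sets borel \<Longrightarrow>
        measure M {\<omega> \<in> space M. X 1 \<omega> \<in> A \<and> V (X 1 \<omega>, Y 1 \<omega>) \<le> v}
          = set_lebesgue_integral (distr M borel (X 1)) A (\<lambda>x. F x v)"
    and lip: "\<And>x x' v. x \<in> unit_cube \<Longrightarrow> x' \<in> unit_cube \<Longrightarrow> \<bar>F x v - F x' v\<bar> \<le> L * d x x'"
    and small_ball: "\<And>n \<epsilon> x0. 0 < \<epsilon> \<Longrightarrow> \<epsilon> \<le> h n \<Longrightarrow> x0 \<in> unit_cube \<Longrightarrow>
        measure M {\<omega> \<in> space M. d x0 (X 1 \<omega>) \<le> \<epsilon>} \<ge> \<epsilon> powr \<beta> / L"
    and h_pos: "\<And>n. h n > 0"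
    and h_lim: "h \<longlonglongrightarrow> 0"
    and h_rate: "filterlim (\<lambda>n. real n * h n powr \<beta> / ln (real n)) at_top sequentially"
  shows
    "(\<forall>n. \<forall>x0\<in>unit_cube.
        measure M {\<omega> \<in> space M. Bsum d (h n) X n x0 \<omega> \<le> real n * h n powr \<beta> / (2 * exp 1 * L)}
          \<le> exp (- (real n * h n powr \<beta>) / (8 * L)))
     \<and> (\<exists>C>0. \<exists>N. \<forall>n\<ge>N. \<forall>x0\<in>unit_cube. AE \<omega> in M.
          Delta_sum d (h n) F X n x0 \<omega> / max (Bsum d (h n) X n x0 \<omega>) (real n * h n powr \<beta>)
            \<le> C * h n * ln (1 / h n))
     \<and> (\<forall>n\<ge>1. \<forall>i\<in>{1..n+1}. AE \<omega> in M.
          real_cond_exp M (cond_sigma M X (\<lambda>j \<omega>. V (X j \<omega>, Y j \<omega>)) n i)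
            (indicator {\<omega>' \<in> space M.
                \<bar>Rstat d (h n) F X (\<lambda>j \<omega>. V (X j \<omega>, Y j \<omega>)) n i \<omega>'\<bar>
                  \<ge> sqrt (ln (real n) / Bsum d (h n) X n (X i \<omega>') \<omega>')}) \<omega>
          \<le> 2 / real n ^ 2)"
proof -
  interpret A4 M X Y MY V d F pX L \<beta> h
    by (rule A4.intro[OF P meas_X meas_Y meas_V indep ident support L_pos beta_nonneg meas_d
          d_nonneg d_refl F_meas F_cdf F_cond lip small_ball h_pos h_lim])
  show ?thesis
  proof (intro conjI)
    show "\<forall>n. \<forall>x0\<in>unit_cube.
        measure M {\<omega> \<in> space M. Bsum d (h n) X n x0 \<omega> \<le> real n * h n powr \<beta> / (2 * exp 1 * L)}
          \<le> exp (- (real n * h n powr \<beta>) / (8 * L))"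
      using part_a1 by blast
    show "\<exists>C>0. \<exists>N. \<forall>n\<ge>N. \<forall>x0\<in>unit_cube. AE \<omega> in M.
          Delta_sum d (h n) F X n x0 \<omega> / max (Bsum d (h n) X n x0 \<omega>) (real n * h n powr \<beta>)
            \<le> C * h n * ln (1 / h n)"
      by (rule part_b)
    show "\<forall>n\<ge>1. \<forall>i\<in>{1..n+1}. AE \<omega> in M.
          real_cond_exp M (cond_sigma M X (\<lambda>j \<omega>. V (X j \<omega>, Y j \<omega>)) n i)
            (indicator {\<omega>' \<in> space M.
                \<bar>Rstat d (h n) F X (\<lambda>j \<omega>. V (X j \<omega>, Y j \<omega>)) n i \<omega>'\<bar>
                  \<ge> sqrt (ln (real n) / Bsum d (h n) X n (X i \<omega>') \<omega>')}) \<omega>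
          \<le> 2 / real n ^ 2"
      using part_c by blast
  qed
qed

end
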